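(* In the supersample setting described in the context, let $\mathcal L$ be the domain of $L_i^+$ and, for each $i$, consider the random process $\{\xi^i(\ell^+)\}_{\ell^+\in\mathcal L}$ with $\xi^i(\ell^+)=\varepsilon_i\ell^+$, where $\varepsilon_i=(-1)^{1-U_i}$. For each $i\in\{1,\dots,n\}$ assume $\{L^+_{i,k}\}_{k=k_0}^\infty$ is a stochastic chain of the pair $(\{\xi^i(\ell^+)\}_{\ell^+\in\mathcal L},L^+_i)$. Then \[ \mathrm{Err}\leq \frac{2}{n}\sum_{i=1}^n\sum_{k=k_0+1}^\infty\sqrt{2\,\mathbb E\!\left[|L^+_{i,k}-L^+_{i,k-1}|^2\right]I( L^+_{i,k};U_i)}, \] where the expectation is over $(L^+_{i,k},L^+_{i,k-1})$.
   Context: Let $\mathcal Z=\mathcal X\times\mathcal Y$ and let $\mu$ be a distribution on $\mathcal Z$. A (possibly randomized) learning algorithm $\mathcal A$ maps a training sample in $\mathcal Z^n$ to a hypothesis $W\in\mathcal W$, and $\ell:\mathcal W\times\mathcal Z\to[0,\infty)$ is a loss (not assumed discrete or bounded). For $S=(Z_1,\dots,Z_n)\sim\mu^{n}$ and $W\sim P_{W|S}$, let $L_\mu=\mathbb E_W\mathbb E_{Z'\sim\mu}[\ell(W,Z')]$ (with $Z'$ independent of $(S,W)$), $L_n=\mathbb E_{W,S}[\frac1n\sum_i\ell(W,Z_i)]$, $\mathrm{Err}=L_\mu-L_n$. Supersample: $\widetilde Z=(\widetilde Z_{i,j})_{i\in\{1,\dots,n\},j\in\{0,1\}}$ with i.i.d.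 entries of law $\mu$; $U=(U_1,\dots,U_n)$ uniform on $\{0,1\}^n$, independent of $\widetilde Z$; $W=\mathcal A(\widetilde Z_U)$ with $\widetilde Z_U=(\widetilde Z_{1,U_1},\dots,\widetilde Z_{n,U_n})$; $L_i^+=\ell(W,\widetilde Z_{i,0})$. Stochastic chain: for a random process $\{X_t\}_{t\in\mathcal T}$ and a random variable $T$ in $\mathcal T$, a sequence of $\mathcal T$-valued random variables $\{T_k\}_{k=k_0}^\infty$ is a stochastic chain of $(\{X_t\},T)$ if (1) $\lim_{k\to\infty}\mathbb E[X_{T_k}]=\mathbb E[X_T]$; (2) $\mathbb E[X_{T_{k_0}}]=0$; (3) $\{X_t\}_{t\in\mathcal T}-T-T_k-T_{k-1}$ is a Markov chain for every $k>k_0$. Mutual information is in nats. *)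

theory Defs
  imports "HOL-Probability.Probability"
begin

definition cond_indep ::
  "'a measure \<Rightarrow> 'b measure \<Rightarrow> ('a \<Rightarrow> 'b) \<Rightarrow> 'c measure \<Rightarrow> ('a \<Rightarrow> 'c)
     \<Rightarrow> 'd measure \<Rightarrow> ('a \<Rightarrow> 'd) \<Rightarrow> bool" where
  "cond_indep M SX X SY Y SZ Z \<longleftrightarrow>
     X \<in> M \<rightarrow>\<^sub>M SX \<and> Y \<in> M \<rightarrow>\<^sub>M SY \<and> Z \<in> M \<rightarrow>\<^sub>M SZ \<and>
     (\<forall>A\<in>sets SX. \<forall>B\<in>sets SY. AE \<omega> in M.
        real_cond_exp M (vimage_algebra (space M) Z SZ)
          (\<lambda>w. indicator A (X w) * indicator B (Y w)) \<omega> =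
        real_cond_exp M (vimage_algebra (space M) Z SZ) (\<lambda>w. indicator A (X w)) \<omega> *
        real_cond_exp M (vimage_algebra (space M) Z SZ) (\<lambda>w. indicator B (Y w)) \<omega>)"

text \<open>Markov chain X - Y - Z - V: X is independent of Z given Y, and
(X,Y) is independent of V given Z (i.e. p(x,y,z,v) = p(x,y) p(z|y) p(v|z)).\<close>
definition markov_chain4 ::
  "'a measure \<Rightarrow> 'b measure \<Rightarrow> ('a \<Rightarrow> 'b) \<Rightarrow> 'c measure \<Rightarrow> ('a \<Rightarrow> 'c)
     \<Rightarrow> 'd measure \<Rightarrow> ('a \<Rightarrow> 'd) \<Rightarrow> 'e measure \<Rightarrow> ('a \<Rightarrow> 'e) \<Rightarrow> bool" where
  "markov_chain4 M SX X SY Y SZ Z SV V \<longleftrightarrow>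
     cond_indep M SX X SZ Z SY Y \<and>
     cond_indep M (SX \<Otimes>\<^sub>M SY) (\<lambda>w. (X w, Y w)) SV V SZ Z"

text \<open>The process is viewed as the random element t \<mapsto> X t \<omega> of the product space.\<close>
definition stochastic_chain ::
  "'a measure \<Rightarrow> 't measure \<Rightarrow> ('t \<Rightarrow> 'a \<Rightarrow> real) \<Rightarrow> ('a \<Rightarrow> 't)
     \<Rightarrow> (nat \<Rightarrow> 'a \<Rightarrow> 't) \<Rightarrow> nat \<Rightarrow> bool" where
  "stochastic_chain M TS X T Tk k0 \<longleftrightarrow>
     T \<in> M \<rightarrow>\<^sub>M TS \<and> (\<forall>k\<ge>k0. Tk k \<in> M \<rightarrow>\<^sub>M TS) \<and>
     (\<lambda>w. restrict (\<lambda>t. X t w) (space TS)) \<in> M \<rightarrow>\<^sub>M (\<Pi>\<^sub>M t\<in>space TS. borel) \<and>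
     integrable M (\<lambda>w. X (T w) w) \<and> (\<forall>k\<ge>k0. integrable M (\<lambda>w. X (Tk k w) w)) \<and>
     ((\<lambda>k. \<integral>w. X (Tk (k0 + k) w) w \<partial>M) \<longlonglongrightarrow> (\<integral>w. X (T w) w \<partial>M)) \<and>
     (\<integral>w. X (Tk k0 w) w \<partial>M) = 0 \<and>
     (\<forall>k>k0. markov_chain4 M (\<Pi>\<^sub>M t\<in>space TS. borel) (\<lambda>w. restrict (\<lambda>t. X t w) (space TS))
                TS T TS (Tk k) TS (Tk (k - 1)))"

definition ennsqrt :: "ennreal \<Rightarrow> ennreal" where
  "ennsqrt x = (if x = \<infinity> then \<infinity> else ennreal (sqrt (enn2real x)))"

end

theory Submission
  imports Defs
begin

lemma artanh_ge:
  fixes q :: real assumes "0 \<le> q" "q < 1"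
  shows "2*q \<le> ln(1+q) - ln(1-q)"
proof -
  have "(\<lambda>x. ln(1+x) - ln(1-x) - 2*x) 0 \<le> (\<lambda>x. ln(1+x) - ln(1-x) - 2*x) q"
  proof (rule DERIV_nonneg_imp_nondecreasing[OF assms(1)])
    fix x assume x: "0 \<le> x" "x \<le> q"
    then have x1: "x < 1" using assms by auto
    show "\<exists>y. ((\<lambda>x. ln(1+x) - ln(1-x) - 2*x) has_real_derivative y) (at x) \<and> 0 \<le> y"
    proof (intro exI conjI)
      show "((\<lambda>x. ln(1+x) - ln(1-x) - 2*x) has_real_derivative (1/(1+x) + 1/(1-x) - 2)) (at x)"
        using x x1 by (auto intro!: derivative_eq_intros)
      have "1/(1+x) + 1/(1-x) - 2 = 2*x^2/((1+x)*(1-x))" using x x1 by (simp add: divide_simps power2_eq_square) argo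
      also have "\<dots> \<ge> 0" using x x1 by (intro divide_nonneg_pos) auto
      finally show "0 \<le> 1/(1+x) + 1/(1-x) - 2" .
    qed
  qed
  then show ?thesis by simp
qed

lemma binary_pinsker_aux:
  fixes q :: real assumes "0 \<le> q" "q < 1"
  shows "q^2 \<le> (1+q) * ln(1+q) + (1-q) * ln(1-q)"
proof -
  let ?f = "\<lambda>x::real. (1+x) * ln(1+x) + (1-x) * ln(1-x) - x^2"
  have "?f 0 \<le> ?f q"
  proof (rule DERIV_nonneg_imp_nondecreasing[OF assms(1)])
    fix x assume x: "0 \<le> x" "x \<le> q"
    then have x1: "x < 1" using assms by auto
    show "\<exists>y. (?f has_real_derivative y) (at x) \<and> 0 \<le> y"
    proof (intro exI conjI)
      have "1+x \<noteq> 0" "1-x \<noteq> 0" using x x1 by auto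
      then show "(?f has_real_derivative (ln(1+x) - ln(1-x) - 2*x)) (at x)"
        using x x1 by (auto intro!: derivative_eq_intros simp: divide_simps)
      show "0 \<le> ln(1+x) - ln(1-x) - 2*x" using artanh_ge[OF x(1) x1] by simp
    qed
  qed
  then show ?thesis by simp
qed

lemma ln2_ge: "1/2 \<le> ln (2::real)"
proof -
  have "exp (1/2::real) ^ 2 = exp 1" by (simp add: power2_eq_square exp_add[symmetric])
  also have "\<dots> \<le> 3" by (rule exp_le)
  also have "\<dots> \<le> 2^2" by simp
  finally have "exp (1/2::real) \<le> 2" by (rule power2_le_imp_le) simp
  then show ?thesis by (subst ln_ge_iff) auto
qed

lemma binary_pinsker_q:
  fixes q :: real assumes "\<bar>q\<bar> \<le> 1"
  shows "q^2 \<le> (1+q) * ln(1+q) + (1-q) * ln(1-q)"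
proof -
  have *: "q^2 \<le> (1+q) * ln(1+q) + (1-q) * ln(1-q)" if "0 \<le> q" "q \<le> 1" for q :: real
  proof (cases "q = 1")
    case True then show ?thesis using ln2_ge by simp
  next
    case False then show ?thesis using binary_pinsker_aux[of q] that by simp
  qed
  show ?thesis
  proof (cases "0 \<le> q")
    case True then show ?thesis using * assms by auto
  next
    case False then show ?thesis using *[of "-q"] assms by (auto simp: algebra_simps)
  qed
qed

lemma binary_pinsker:
  fixes p :: real assumes "0 \<le> p" "p \<le> 1"
  shows "(2*p-1)^2 \<le> 2 * (p * ln (2*p) + (1-p) * ln (2*(1-p)))"
proof -
  have "(2*p-1)^2 \<le> (1+(2*p-1)) * ln(1+(2*p-1)) + (1-(2*p-1)) * ln(1-(2*p-1))"
    using assms by (intro binary_pinsker_q) auto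
  also have "\<dots> = 2 * (p * ln (2*p) + (1-p) * ln (2*(1-p)))"
    by (simp add: algebra_simps)
  finally show ?thesis .
qed

lemma split_density:
  fixes M :: "'a measure" and S :: "'t measure" and T :: "'a \<Rightarrow> 't" and U :: "'a \<Rightarrow> bool"
  assumes M: "prob_space M" and T[measurable]: "T \<in> M \<rightarrow>\<^sub>M S"
    and U[measurable]: "U \<in> M \<rightarrow>\<^sub>M count_space UNIV"
  obtains h where "h \<in> borel_measurable S" "\<And>t. t \<in> space S \<Longrightarrow> 0 \<le> h t \<and> h t \<le> 1"
    "\<And>A. A \<in> sets S \<Longrightarrow> emeasure M {\<omega>\<in>space M. T \<omega> \<in> A \<and> U \<omega>}
        = (\<integral>\<^sup>+t. indicator A t * ennreal (h t) \<partial>distr M S T)"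
    "\<And>A. A \<in> sets S \<Longrightarrow> emeasure M {\<omega>\<in>space M. T \<omega> \<in> A \<and> \<not> U \<omega>}
        = (\<integral>\<^sup>+t. indicator A t * ennreal (1 - h t) \<partial>distr M S T)"
proof -
  interpret prob_space M by fact
  define \<nu> where "\<nu> = distr M S T"
  interpret nu: prob_space \<nu> unfolding \<nu>_def by (rule prob_space_distr) simp
  have Usets[measurable]: "{\<omega>\<in>space M. U \<omega>} \<in> sets M" "{\<omega>\<in>space M. \<not> U \<omega>} \<in> sets M"
    by measurable
  define \<nu>1 where "\<nu>1 = distr (density M (indicator {\<omega>\<in>space M. U \<omega>})) S T"
  define \<nu>0 where "\<nu>0 = distr (density M (indicator {\<omega>\<in>space M. \<not> U \<omega>})) S T"
  have em: "emeasure (distr (density M (indicator B)) S T) A = emeasure M {\<omega>\<in>space M. T \<omega> \<in> A \<and> \<omega> \<in> B}"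
    if A: "A \<in> sets S" and B: "B \<in> sets M" for A B
  proof -
    note [measurable] = A B
    have "emeasure (distr (density M (indicator B)) S T) A
        = emeasure (density M (indicator B)) (T -` A \<inter> space M)"
      using A by (subst emeasure_distr) auto
    also have "\<dots> = (\<integral>\<^sup>+\<omega>. indicator (T -` A \<inter> space M) \<omega> * indicator B \<omega> \<partial>M)"
      using A B by (subst emeasure_density) (auto simp: mult.commute)
    also have "\<dots> = (\<integral>\<^sup>+\<omega>. indicator {\<omega>\<in>space M. T \<omega> \<in> A \<and> \<omega> \<in> B} \<omega> \<partial>M)"
      by (intro nn_integral_cong) (auto split: split_indicator)
    also have "\<dots> = emeasure M {\<omega>\<in>space M. T \<omega> \<in> A \<and> \<omega> \<in> B}"
      using A B by (intro nn_integral_indicator) measurable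
    finally show ?thesis .
  qed
  have em1: "emeasure \<nu>1 A = emeasure M {\<omega>\<in>space M. T \<omega> \<in> A \<and> U \<omega>}" if "A \<in> sets S" for A
    unfolding \<nu>1_def em[OF that Usets(1)] by (rule arg_cong[where f="emeasure M"]) auto
  have em0: "emeasure \<nu>0 A = emeasure M {\<omega>\<in>space M. T \<omega> \<in> A \<and> \<not> U \<omega>}" if "A \<in> sets S" for A
    unfolding \<nu>0_def em[OF that Usets(2)] by (rule arg_cong[where f="emeasure M"]) auto
  have emnu: "emeasure \<nu> A = emeasure M {\<omega>\<in>space M. T \<omega> \<in> A}" if "A \<in> sets S" for A
    using that unfolding \<nu>_def by (subst emeasure_distr) (auto intro!: arg_cong[where f="emeasure M"])
  have sets_nu: "sets \<nu> = sets S" by (simp add: \<nu>_def)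
  have ac1: "absolutely_continuous \<nu> \<nu>1" "absolutely_continuous \<nu> \<nu>0"
    unfolding absolutely_continuous_def
  proof safe
    fix A assume A: "A \<in> null_sets \<nu>"
    then have As: "A \<in> sets S" using sets_nu by (auto simp: null_sets_def)
    have z: "emeasure M {\<omega>\<in>space M. T \<omega> \<in> A} = 0" using A emnu[OF As] by (auto simp: null_sets_def)
    have "emeasure M {\<omega>\<in>space M. T \<omega> \<in> A \<and> U \<omega>} \<le> emeasure M {\<omega>\<in>space M. T \<omega> \<in> A}"
      using As by (intro emeasure_mono) auto
    then show "A \<in> null_sets \<nu>1" using z As em1[OF As] by (auto simp: null_sets_def \<nu>1_def)
    have "emeasure M {\<omega>\<in>space M. T \<omega> \<in> A \<and> \<not> U \<omega>} \<le> emeasure M {\<omega>\<in>space M. T \<omega> \<in> A}"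
      using As by (intro emeasure_mono) auto
    then show "A \<in> null_sets \<nu>0" using z As em0[OF As] by (auto simp: null_sets_def \<nu>0_def)
  qed
  obtain h1 where h1[measurable]: "h1 \<in> borel_measurable \<nu>" and dh1: "density \<nu> h1 = \<nu>1"
    using nu.Radon_Nikodym[OF ac1(1)] by (auto simp: \<nu>1_def \<nu>_def)
  obtain h0 where h0[measurable]: "h0 \<in> borel_measurable \<nu>" and dh0: "density \<nu> h0 = \<nu>0"
    using nu.Radon_Nikodym[OF ac1(2)] by (auto simp: \<nu>0_def \<nu>_def)
  have "density \<nu> (\<lambda>t. h1 t + h0 t) = density \<nu> (\<lambda>_. 1)"
  proof (rule measure_eqI)
    fix A assume "A \<in> sets (density \<nu> (\<lambda>t. h1 t + h0 t))"
    then have A: "A \<in> sets S" by (simp add: sets_nu)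
    have "emeasure (density \<nu> (\<lambda>t. h1 t + h0 t)) A = (\<integral>\<^sup>+t. h1 t * indicator A t + h0 t * indicator A t \<partial>\<nu>)"
      using A sets_nu by (subst emeasure_density) (auto intro!: nn_integral_cong simp: distrib_right)
    also have "\<dots> = emeasure (density \<nu> h1) A + emeasure (density \<nu> h0) A"
      using A sets_nu by (subst nn_integral_add) (auto simp: emeasure_density)
    also have "\<dots> = emeasure M {\<omega>\<in>space M. T \<omega> \<in> A \<and> U \<omega>} + emeasure M {\<omega>\<in>space M. T \<omega> \<in> A \<and> \<not> U \<omega>}"
      using em1[OF A] em0[OF A] dh1 dh0 by simp
    also have "\<dots> = emeasure M ({\<omega>\<in>space M. T \<omega> \<in> A \<and> U \<omega>} \<union> {\<omega>\<in>space M. T \<omega> \<in> A \<and> \<not> U \<omega>})"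
      using A by (intro plus_emeasure) auto
    also have "\<dots> = emeasure \<nu> A"
      using emnu[OF A] by (auto intro!: arg_cong[where f="emeasure M"])
    also have "\<dots> = emeasure (density \<nu> (\<lambda>_. 1)) A"
      using A sets_nu by (simp add: emeasure_density)
    finally show "emeasure (density \<nu> (\<lambda>t. h1 t + h0 t)) A = emeasure (density \<nu> (\<lambda>_. 1)) A" .
  qed simp
  then have ae: "AE t in \<nu>. h1 t + h0 t = 1"
    by (intro nu.density_unique) auto
  define h where "h t = min 1 (enn2real (h1 t))" for t
  have hm[measurable]: "h \<in> borel_measurable S"
    using h1 unfolding h_def by (simp add: measurable_cong_sets[OF sets_nu refl, symmetric])
  have hb: "0 \<le> h t \<and> h t \<le> 1" for t unfolding h_def by auto
  have ae1: "AE t in \<nu>. h1 t = ennreal (h t)"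
    using ae
  proof eventually_elim
    case (elim t)
    have "h1 t \<le> h1 t + h0 t" using le_iff_add by blast
    then have "h1 t \<le> 1" using elim by simp
    then have "h1 t < \<top>" using le_less_trans ennreal_one_less_top by blast
    then have "h1 t \<noteq> \<top>" by simp
    then have "h1 t = ennreal (enn2real (h1 t))" by (simp add: ennreal_enn2real_if)
    moreover have "enn2real (h1 t) \<le> 1" using \<open>h1 t \<le> 1\<close>
      using enn2real_mono[OF \<open>h1 t \<le> 1\<close>] by simp
    ultimately show ?case by (simp add: h_def min_absorb2)
  qed
  have ae0: "AE t in \<nu>. h0 t = ennreal (1 - h t)"
    using ae ae1
  proof eventually_elim
    case (elim t)
    have "h1 t \<noteq> \<top>" using elim by simp
    then have "h0 t = (h1 t + h0 t) - h1 t" by (rule ennreal_add_diff_cancel_left[symmetric])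
    also have "\<dots> = ennreal 1 - ennreal (h t)" using elim by simp
    also have "\<dots> = ennreal (1 - h t)" using hb[of t] by (subst ennreal_minus) auto
    finally show ?case .
  qed
  show ?thesis
  proof (rule that[OF hm])
    show "\<And>t. t \<in> space S \<Longrightarrow> 0 \<le> h t \<and> h t \<le> 1" using hb by auto
    fix A assume A: "A \<in> sets S"
    have "emeasure M {\<omega>\<in>space M. T \<omega> \<in> A \<and> U \<omega>} = emeasure (density \<nu> h1) A"
      using em1[OF A] dh1 by simp
    also have "\<dots> = (\<integral>\<^sup>+t. h1 t * indicator A t \<partial>\<nu>)"
      using A sets_nu by (simp add: emeasure_density)
    also have "\<dots> = (\<integral>\<^sup>+t. indicator A t * ennreal (h t) \<partial>\<nu>)"
      using ae1 by (intro nn_integral_cong_AE) (auto simp: mult.commute)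
    finally show "emeasure M {\<omega>\<in>space M. T \<omega> \<in> A \<and> U \<omega>} = (\<integral>\<^sup>+t. indicator A t * ennreal (h t) \<partial>distr M S T)"
      by (simp add: \<nu>_def)
    have "emeasure M {\<omega>\<in>space M. T \<omega> \<in> A \<and> \<not> U \<omega>} = emeasure (density \<nu> h0) A"
      using em0[OF A] dh0 by simp
    also have "\<dots> = (\<integral>\<^sup>+t. h0 t * indicator A t \<partial>\<nu>)"
      using A sets_nu by (simp add: emeasure_density)
    also have "\<dots> = (\<integral>\<^sup>+t. indicator A t * ennreal (1 - h t) \<partial>\<nu>)"
      using ae0 by (intro nn_integral_cong_AE) (auto simp: mult.commute)
    finally show "emeasure M {\<omega>\<in>space M. T \<omega> \<in> A \<and> \<not> U \<omega>} = (\<integral>\<^sup>+t. indicator A t * ennreal (1 - h t) \<partial>distr M S T)"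
      by (simp add: \<nu>_def)
  qed
qed

lemma xlog_bound:
  fixes x :: real assumes "0 \<le> x" "x \<le> 1"
  shows "\<bar>x * ln (2*x)\<bar> \<le> 1"
proof (cases "x = 0")
  case True then show ?thesis by simp
next
  case False
  then have x: "0 < x" using assms by auto
  have up: "ln (2*x) \<le> 2*x - 1" using x by (intro ln_le_minus_one) auto
  have lo: "1 - 1/(2*x) \<le> ln (2*x)"
  proof -
    have "ln (1/(2*x)) \<le> 1/(2*x) - 1" using x by (intro ln_le_minus_one) auto
    moreover have "ln (1/(2*x)) = - ln (2*x)" using x by (simp add: ln_div)
    ultimately show ?thesis by simp
  qed
  have "x * ln (2*x) \<le> 1"
  proof (cases "ln (2*x) \<ge> 0")
    case True
    then have "x * ln (2*x) \<le> 1 * ln (2*x)" using assms by (intro mult_right_mono) auto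
    then show ?thesis using up assms by simp
  next
    case False
    then have "x * ln (2*x) \<le> 0" using x by (simp add: mult_nonneg_nonpos)
    then show ?thesis by simp
  qed
  moreover have "x * (1 - 1/(2*x)) \<le> x * ln (2*x)" using lo x by (intro mult_left_mono) auto
  moreover have "x * (1 - 1/(2*x)) = x - 1/2" using x by (simp add: field_simps)
  ultimately show ?thesis using assms by auto
qed

lemma mi_lower:
  fixes M :: "'a measure" and S :: "'t measure" and T :: "'a \<Rightarrow> 't" and U :: "'a \<Rightarrow> bool"
  assumes M: "prob_space M" and T[measurable]: "T \<in> M \<rightarrow>\<^sub>M S"
    and U[measurable]: "U \<in> M \<rightarrow>\<^sub>M count_space UNIV"
    and half: "emeasure M {\<omega>\<in>space M. U \<omega>} = ennreal (1/2)"
    and hm[measurable]: "h \<in> borel_measurable S" and hb: "\<And>t. t \<in> space S \<Longrightarrow> 0 \<le> h t \<and> h t \<le> 1"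
    and h1: "\<And>A. A \<in> sets S \<Longrightarrow> emeasure M {\<omega>\<in>space M. T \<omega> \<in> A \<and> U \<omega>}
        = (\<integral>\<^sup>+t. indicator A t * ennreal (h t) \<partial>distr M S T)"
    and h0: "\<And>A. A \<in> sets S \<Longrightarrow> emeasure M {\<omega>\<in>space M. T \<omega> \<in> A \<and> \<not> U \<omega>}
        = (\<integral>\<^sup>+t. indicator A t * ennreal (1 - h t) \<partial>distr M S T)"
  shows "(\<integral>\<omega>. (2 * h (T \<omega>) - 1)^2 \<partial>M) \<le> 2 * prob_space.mutual_information M (exp 1) S (count_space UNIV) T U"
proof -
  interpret prob_space M by fact
  define \<nu> where "\<nu> = distr M S T"
  interpret nu: prob_space \<nu> unfolding \<nu>_def by (rule prob_space_distr) simp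
  let ?C = "count_space (UNIV :: bool set)"
  interpret C: sigma_finite_measure ?C by (rule sigma_finite_measure_count_space_finite) auto
  interpret NC: pair_sigma_finite \<nu> ?C ..
  have sets_nu: "sets \<nu> = sets S" by (simp add: \<nu>_def)
  have space_nu: "space \<nu> = space S" by (simp add: \<nu>_def)
  have hm'[measurable]: "h \<in> borel_measurable \<nu>" using hm by (simp add: measurable_cong_sets[OF sets_nu refl])
  define g where "g x = (if snd x then h (fst x) else 1 - h (fst x))" for x
  have gm[measurable]: "g \<in> borel_measurable (\<nu> \<Otimes>\<^sub>M ?C)" unfolding g_def by measurable
  have gm2[measurable]: "g \<in> borel_measurable (S \<Otimes>\<^sub>M ?C)" unfolding g_def by measurable
  have gb: "0 \<le> g x \<and> g x \<le> 1" if "x \<in> space (\<nu> \<Otimes>\<^sub>M ?C)" for x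
    using that hb by (auto simp: g_def space_pair_measure space_nu)
  have sets_NC: "sets (\<nu> \<Otimes>\<^sub>M ?C) = sets (S \<Otimes>\<^sub>M ?C)"
    by (intro sets_pair_measure_cong sets_nu refl)
  have half0: "emeasure M {\<omega>\<in>space M. \<not> U \<omega>} = ennreal (1/2)"
  proof -
    have "{\<omega>\<in>space M. \<not> U \<omega>} = space M - {\<omega>\<in>space M. U \<omega>}" by auto
    then have "emeasure M {\<omega>\<in>space M. \<not> U \<omega>} = emeasure M (space M) - emeasure M {\<omega>\<in>space M. U \<omega>}"
      by (simp add: emeasure_compl)
    also have "\<dots> = ennreal 1 - ennreal (1/2)" by (simp only: emeasure_space_1 half ennreal_1)
    also have "\<dots> = ennreal (1/2)" by (subst ennreal_minus) auto
    finally show ?thesis .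
  qed
  have PU: "distr M ?C U = density ?C (\<lambda>_. ennreal (1/2))"
  proof (rule measure_eqI)
    fix A :: "bool set" assume "A \<in> sets (distr M ?C U)"
    have "A \<in> Pow {False, True}" by auto
    then have Acases: "A = {} \<or> A = {True} \<or> A = {False} \<or> A = {False, True}"
      by (simp add: Pow_insert) blast
    have d: "emeasure (distr M ?C U) A = emeasure M {\<omega>\<in>space M. U \<omega> \<in> A}"
      by (subst emeasure_distr) (auto intro!: arg_cong[where f="emeasure M"])
    have e: "emeasure (density ?C (\<lambda>_. ennreal (1/2))) A = (\<Sum>b\<in>A. ennreal (1/2))"
      by (subst emeasure_density) (simp_all add: nn_integral_count_space_finite indicator_def of_bool_def if_distrib sum.If_cases)
    have t: "{\<omega>\<in>space M. U \<omega> \<in> {True}} = {\<omega>\<in>space M. U \<omega>}" "{\<omega>\<in>space M. U \<omega> \<in> {False}} = {\<omega>\<in>space M. \<not> U \<omega>}"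
       "{\<omega>\<in>space M. U \<omega> \<in> {False, True}} = space M" "{\<omega>\<in>space M. U \<omega> \<in> {}} = {}"
      by auto
    have s2: "ennreal (1/2) + ennreal (1/2) = 1" by (subst ennreal_plus[symmetric]) auto
    have "emeasure M {\<omega>\<in>space M. U \<omega> \<in> A} = (\<Sum>b\<in>A. ennreal (1/2))"
      using Acases
    proof (elim disjE)
      assume "A = {False, True}" then show ?thesis
        using ennreal_divide_self[of 2] by (simp only: t emeasure_space_1) (simp add: divide_ennreal_def)
    next
      assume "A = {}" then show ?thesis by (simp only: t) simp
    next
      assume "A = {True}" then show ?thesis by (simp only: t half) simp
    next
      assume "A = {False}" then show ?thesis by (simp only: t half0) simp
    qed
    then show "emeasure (distr M ?C U) A = emeasure (density ?C (\<lambda>_. ennreal (1/2))) A"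
      unfolding d e .
  qed simp
  have prod: "distr M S T \<Otimes>\<^sub>M distr M ?C U = density (\<nu> \<Otimes>\<^sub>M ?C) (\<lambda>x. ennreal (1/2))"
  proof -
    have "distr M S T \<Otimes>\<^sub>M distr M ?C U = density \<nu> (\<lambda>_. 1) \<Otimes>\<^sub>M density ?C (\<lambda>_. ennreal (1/2))"
      unfolding PU density_1 \<nu>_def ..
    also have "\<dots> = density (\<nu> \<Otimes>\<^sub>M ?C) (\<lambda>(x,y). 1 * ennreal (1/2))"
      by (rule pair_measure_density) (auto intro: C.sigma_finite_measure_axioms sigma_finite_measure_count_space_finite 
            simp: sigma_finite_iff_density_finite' C.sigma_finite_iff_density_finite)
    finally show ?thesis by (simp add: case_prod_unfold)
  qed
  have joint: "distr M (S \<Otimes>\<^sub>M ?C) (\<lambda>\<omega>. (T \<omega>, U \<omega>)) = density (\<nu> \<Otimes>\<^sub>M ?C) (\<lambda>x. ennreal (g x))"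
  proof (rule measure_eqI)
    show "sets (distr M (S \<Otimes>\<^sub>M ?C) (\<lambda>\<omega>. (T \<omega>, U \<omega>))) = sets (density (\<nu> \<Otimes>\<^sub>M ?C) (\<lambda>x. ennreal (g x)))"
      using sets_NC by simp
    fix X assume "X \<in> sets (distr M (S \<Otimes>\<^sub>M ?C) (\<lambda>\<omega>. (T \<omega>, U \<omega>)))"
    then have X[measurable]: "X \<in> sets (S \<Otimes>\<^sub>M ?C)" by simp
    define X1 where "X1 = (\<lambda>t. (t, True)) -` X"
    define X0 where "X0 = (\<lambda>t. (t, False)) -` X"
    have X1[measurable]: "X1 \<in> sets S" "X0 \<in> sets S" unfolding X1_def X0_def by (auto intro: sets_Pair2[OF X])
    have "emeasure (density (\<nu> \<Otimes>\<^sub>M ?C) (\<lambda>x. ennreal (g x))) X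
        = (\<integral>\<^sup>+x. ennreal (g x) * indicator X x \<partial>(\<nu> \<Otimes>\<^sub>M ?C))"
      using X sets_NC by (subst emeasure_density) auto
    also have "\<dots> = (\<integral>\<^sup>+t. (\<integral>\<^sup>+b. ennreal (g (t,b)) * indicator X (t,b) \<partial>?C) \<partial>\<nu>)"
      using X sets_NC by (subst C.nn_integral_fst[symmetric]) (auto simp: measurable_cong_sets[OF sets_NC refl])
    also have "\<dots> = (\<integral>\<^sup>+t. indicator X1 t * ennreal (h t) + indicator X0 t * ennreal (1 - h t) \<partial>\<nu>)"
      by (intro nn_integral_cong, subst nn_integral_count_space_finite, simp)
         (simp add: UNIV_bool g_def X1_def X0_def indicator_def add.commute)
    also have "\<dots> = (\<integral>\<^sup>+t. indicator X1 t * ennreal (h t) \<partial>\<nu>) + (\<integral>\<^sup>+t. indicator X0 t * ennreal (1 - h t) \<partial>\<nu>)"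
      using X1 sets_nu by (intro nn_integral_add) auto
    also have "\<dots> = emeasure M {\<omega>\<in>space M. T \<omega> \<in> X1 \<and> U \<omega>} + emeasure M {\<omega>\<in>space M. T \<omega> \<in> X0 \<and> \<not> U \<omega>}"
      using h1[OF X1(1)] h0[OF X1(2)] by (simp add: \<nu>_def)
    also have "\<dots> = emeasure M ({\<omega>\<in>space M. T \<omega> \<in> X1 \<and> U \<omega>} \<union> {\<omega>\<in>space M. T \<omega> \<in> X0 \<and> \<not> U \<omega>})"
      by (intro plus_emeasure) auto
    also have "\<dots> = emeasure M ((\<lambda>\<omega>. (T \<omega>, U \<omega>)) -` X \<inter> space M)"
      by (intro arg_cong[where f="emeasure M"]) (auto simp: X1_def X0_def; metis (full_types))
    also have "\<dots> = emeasure (distr M (S \<Otimes>\<^sub>M ?C) (\<lambda>\<omega>. (T \<omega>, U \<omega>))) X"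
      by (subst emeasure_distr) auto
    finally show "emeasure (distr M (S \<Otimes>\<^sub>M ?C) (\<lambda>\<omega>. (T \<omega>, U \<omega>))) X = emeasure (density (\<nu> \<Otimes>\<^sub>M ?C) (\<lambda>x. ennreal (g x))) X" ..
  qed
  have MI: "mutual_information (exp 1) S ?C T U = (\<integral>x. g x * ln (2 * g x) \<partial>(\<nu> \<Otimes>\<^sub>M ?C))"
  proof -
    have "mutual_information (exp 1) S ?C T U = KL_divergence (exp 1) (density (\<nu> \<Otimes>\<^sub>M ?C) (\<lambda>x. ennreal (1/2))) (density (\<nu> \<Otimes>\<^sub>M ?C) (\<lambda>x. ennreal (g x)))"
      unfolding mutual_information_def prod joint ..
    also have "\<dots> = (\<integral>x. g x * log (exp 1) (g x / (1/2)) \<partial>(\<nu> \<Otimes>\<^sub>M ?C))"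
      using gb by (intro NC.KL_density_density) auto
    also have "\<dots> = (\<integral>x. g x * ln (2 * g x) \<partial>(\<nu> \<Otimes>\<^sub>M ?C))"
      by (intro Bochner_Integration.integral_cong) (auto simp: log_def mult.commute)
    finally show ?thesis .
  qed
  interpret NCf: finite_measure "\<nu> \<Otimes>\<^sub>M ?C"
  proof (rule finite_measureI)
    have "emeasure (\<nu> \<Otimes>\<^sub>M ?C) (space (\<nu> \<Otimes>\<^sub>M ?C)) = emeasure \<nu> (space \<nu>) * emeasure ?C (space ?C)"
      unfolding space_pair_measure by (rule C.emeasure_pair_measure_Times) auto
    then show "emeasure (\<nu> \<Otimes>\<^sub>M ?C) (space (\<nu> \<Otimes>\<^sub>M ?C)) \<noteq> \<infinity>"
      by (simp add: ennreal_mult_eq_top_iff)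
  qed
  have intf: "integrable (\<nu> \<Otimes>\<^sub>M ?C) (\<lambda>x. g x * ln (2 * g x))"
    by (rule NCf.integrable_const_bound[where B=1]) (auto intro!: xlog_bound simp: gb)
  have "mutual_information (exp 1) S ?C T U = (\<integral>t. (\<integral>b. g (t,b) * ln (2 * g (t,b)) \<partial>?C) \<partial>\<nu>)"
    unfolding MI by (rule NC.integral_fst'[OF intf, symmetric])
  also have "\<dots> = (\<integral>t. h t * ln (2 * h t) + (1 - h t) * ln (2 * (1 - h t)) \<partial>\<nu>)"
    by (intro Bochner_Integration.integral_cong refl)
       (simp add: lebesgue_integral_count_space_finite UNIV_bool g_def)
  finally have MI2: "mutual_information (exp 1) S ?C T U = (\<integral>t. h t * ln (2 * h t) + (1 - h t) * ln (2 * (1 - h t)) \<partial>\<nu>)" .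
  have "(\<integral>\<omega>. (2 * h (T \<omega>) - 1)^2 \<partial>M) = (\<integral>t. (2 * h t - 1)^2 \<partial>\<nu>)"
    unfolding \<nu>_def by (rule integral_distr[symmetric]) auto
  also have "\<dots> \<le> (\<integral>t. 2 * (h t * ln (2 * h t) + (1 - h t) * ln (2 * (1 - h t))) \<partial>\<nu>)"
  proof (rule integral_mono)
    show "integrable \<nu> (\<lambda>t. (2 * h t - 1)^2)"
    proof (rule nu.integrable_const_bound[where B=1])
      show "AE t in \<nu>. norm ((2 * h t - 1)^2) \<le> 1"
      proof (rule AE_I2)
        fix t assume "t \<in> space \<nu>"
        then have "0 \<le> h t" "h t \<le> 1" using hb space_nu by auto
        then have "\<bar>2 * h t - 1\<bar> \<le> 1" by auto
        then show "norm ((2 * h t - 1)^2) \<le> 1" by (simp add: abs_square_le_1)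
      qed
    qed simp
    show "integrable \<nu> (\<lambda>t. 2 * (h t * ln (2 * h t) + (1 - h t) * ln (2 * (1 - h t))))"
    proof (rule nu.integrable_const_bound[where B=4])
      show "AE t in \<nu>. norm (2 * (h t * ln (2 * h t) + (1 - h t) * ln (2 * (1 - h t)))) \<le> 4"
      proof (rule AE_I2)
        fix t assume "t \<in> space \<nu>"
        then have "0 \<le> h t" "h t \<le> 1" using hb space_nu by auto
        then have "\<bar>h t * ln (2 * h t)\<bar> \<le> 1" "\<bar>(1 - h t) * ln (2 * (1 - h t))\<bar> \<le> 1"
          using xlog_bound[of "h t"] xlog_bound[of "1 - h t"] by auto
        then show "norm (2 * (h t * ln (2 * h t) + (1 - h t) * ln (2 * (1 - h t)))) \<le> 4" by simp
      qed
    qed simp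
    fix t assume "t \<in> space \<nu>"
    then show "(2 * h t - 1)^2 \<le> 2 * (h t * ln (2 * h t) + (1 - h t) * ln (2 * (1 - h t)))"
      using hb space_nu by (intro binary_pinsker) auto
  qed
  also have "\<dots> = 2 * mutual_information (exp 1) S ?C T U"
    unfolding MI2 by (rule integral_mult_right_zero)
  finally show ?thesis .
qed

lemma nn_transfer:
  fixes a b :: "'a \<Rightarrow> ennreal"
  assumes Vm[measurable]: "V \<in> M \<rightarrow>\<^sub>M S" and am[measurable]: "a \<in> borel_measurable M"
    and bm[measurable]: "b \<in> borel_measurable M"
    and eq: "\<And>B. B \<in> sets S \<Longrightarrow> (\<integral>\<^sup>+\<omega>. a \<omega> * indicator B (V \<omega>) \<partial>M) = (\<integral>\<^sup>+\<omega>. b \<omega> * indicator B (V \<omega>) \<partial>M)"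
    and fm[measurable]: "f \<in> borel_measurable S"
  shows "(\<integral>\<^sup>+\<omega>. a \<omega> * f (V \<omega>) \<partial>M) = (\<integral>\<^sup>+\<omega>. b \<omega> * f (V \<omega>) \<partial>M)"
proof -
  have D: "distr (density M a) S V = distr (density M b) S V"
  proof (rule measure_eqI)
    fix B assume "B \<in> sets (distr (density M a) S V)"
    then have B[measurable]: "B \<in> sets S" by simp
    have "emeasure (distr (density M a) S V) B = (\<integral>\<^sup>+\<omega>. a \<omega> * indicator B (V \<omega>) \<partial>M)"
      by (subst emeasure_distr) (auto simp: emeasure_density intro!: nn_integral_cong split: split_indicator)
    also have "\<dots> = (\<integral>\<^sup>+\<omega>. b \<omega> * indicator B (V \<omega>) \<partial>M)" by (rule eq[OF B])
    also have "\<dots> = emeasure (distr (density M b) S V) B"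
      by (subst emeasure_distr) (auto simp: emeasure_density intro!: nn_integral_cong split: split_indicator)
    finally show "emeasure (distr (density M a) S V) B = emeasure (distr (density M b) S V) B" .
  qed simp
  have "(\<integral>\<^sup>+\<omega>. a \<omega> * f (V \<omega>) \<partial>M) = (\<integral>\<^sup>+x. f x \<partial>distr (density M a) S V)"
    by (subst nn_integral_distr) (auto simp: nn_integral_density mult.commute)
  also have "\<dots> = (\<integral>\<^sup>+x. f x \<partial>distr (density M b) S V)" unfolding D ..
  also have "\<dots> = (\<integral>\<^sup>+\<omega>. b \<omega> * f (V \<omega>) \<partial>M)"
    by (subst nn_integral_distr) (auto simp: nn_integral_density mult.commute)
  finally show ?thesis .
qed

lemma amgm_lim:
  fixes x A B :: real
  assumes A: "0 \<le> A" and B: "0 \<le> B" and H: "\<And>l. 0 < l \<Longrightarrow> x \<le> (l * A + B / l) / 2"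
  shows "x \<le> sqrt (A * B)"
proof (cases "A = 0 \<or> B = 0")
  case False
  then have A': "0 < A" and B': "0 < B" using A B by auto
  define l where "l = sqrt B / sqrt A"
  have l: "0 < l" using A' B' by (simp add: l_def)
  have sA: "sqrt A * sqrt A = A" and sB: "sqrt B * sqrt B = B" using A B by simp_all
  have sA0: "sqrt A \<noteq> 0" and sB0: "sqrt B \<noteq> 0" using A' B' by simp_all
  have "l * A = sqrt B * (sqrt A * sqrt A) / sqrt A" unfolding l_def sA by simp
  also have "\<dots> = sqrt A * sqrt B" using sA0 by (simp del: real_sqrt_mult_self)
  finally have e1: "l * A = sqrt A * sqrt B" .
  have "B / l = (sqrt B * sqrt B) * sqrt A / sqrt B" unfolding l_def sB by simp
  also have "\<dots> = sqrt A * sqrt B" using sB0 by (simp del: real_sqrt_mult_self)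
  finally have e2: "B / l = sqrt A * sqrt B" .
  have "(l * A + B / l) / 2 = sqrt (A * B)" unfolding e1 e2 by (simp add: real_sqrt_mult)
  then show ?thesis using H[OF l] by simp
next
  case True
  show ?thesis
  proof (rule ccontr)
    assume "\<not> ?thesis"
    then have x: "x > 0" using True by auto
    show False
    proof (cases "A = 0")
      case True
      define l where "l = (B + 1) / x"
      have l: "0 < l" using x B by (simp add: l_def)
      have "x \<le> B / l / 2" using H[OF l] True by simp
      also have "\<dots> = B * x / (2 * (B + 1))" using x B by (simp add: l_def field_simps)
      also have "\<dots> < x" using x B by (simp add: field_simps) (smt (verit) mult_nonneg_nonneg)
      finally show False by simp
    next
      case False
      then have B0: "B = 0" using \<open>A = 0 \<or> B = 0\<close> by simp
      define l where "l = x / (A + 1)"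
      have l: "0 < l" using x A by (simp add: l_def)
      have "x \<le> l * A / 2" using H[OF l] B0 by simp
      also have "\<dots> = x * A / (2 * (A + 1))" using x A by (simp add: l_def field_simps)
      also have "\<dots> < x" using x A by (simp add: field_simps) (smt (verit) mult_nonneg_nonneg)
      finally show False by simp
    qed
  qed
qed

locale supersample =
  fixes M :: "'a measure"
    and \<mu> :: "'z measure"
    and Wsp :: "'w measure"
    and Rsp :: "'r measure"
    and n :: nat
    and Z :: "nat \<Rightarrow> bool \<Rightarrow> 'a \<Rightarrow> 'z"
    and U :: "nat \<Rightarrow> 'a \<Rightarrow> bool"
    and R :: "'a \<Rightarrow> 'r"
    and \<A> :: "(nat \<Rightarrow> 'z) \<Rightarrow> 'r \<Rightarrow> 'w"
    and W :: "'a \<Rightarrow> 'w"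
    and loss :: "'w \<Rightarrow> 'z \<Rightarrow> real"
  assumes M: "prob_space M"
    and mu: "prob_space \<mu>"
    and n: "n \<ge> 1"
    and loss_nonneg: "\<And>w z. loss w z \<ge> 0"
    and loss_meas: "(\<lambda>(w, z). loss w z) \<in> Wsp \<Otimes>\<^sub>M \<mu> \<rightarrow>\<^sub>M borel"
    and A_meas: "(\<lambda>(s, r). \<A> s r) \<in> (\<Pi>\<^sub>M i\<in>{1..n}. \<mu>) \<Otimes>\<^sub>M Rsp \<rightarrow>\<^sub>M Wsp"
    and Z_meas: "\<And>i j. i \<in> {1..n} \<Longrightarrow> Z i j \<in> M \<rightarrow>\<^sub>M \<mu>"
    and U_meas: "\<And>i. i \<in> {1..n} \<Longrightarrow> U i \<in> M \<rightarrow>\<^sub>M count_space UNIV"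
    and R_meas: "R \<in> M \<rightarrow>\<^sub>M Rsp"
    and joint_law:
      "distr M ((\<Pi>\<^sub>M p\<in>{1..n} \<times> UNIV. \<mu>) \<Otimes>\<^sub>M (\<Pi>\<^sub>M i\<in>{1..n}. measure_pmf (pmf_of_set UNIV)) \<Otimes>\<^sub>M Rsp)
         (\<lambda>\<omega>. (restrict (\<lambda>p. Z (fst p) (snd p) \<omega>) ({1..n} \<times> UNIV),
                restrict (\<lambda>i. U i \<omega>) {1..n}, R \<omega>))
       = (\<Pi>\<^sub>M p\<in>{1..n} \<times> UNIV. \<mu>) \<Otimes>\<^sub>M (\<Pi>\<^sub>M i\<in>{1..n}. measure_pmf (pmf_of_set UNIV))
           \<Otimes>\<^sub>M distr M Rsp R"
    and W_def: "\<And>\<omega>. \<omega> \<in> space M \<Longrightarrow>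
                  W \<omega> = \<A> (restrict (\<lambda>i. Z i (U i \<omega>) \<omega>) {1..n}) (R \<omega>)"
begin

abbreviation "I1 \<equiv> {1..n}"
abbreviation "I2 \<equiv> ({1..n} \<times> (UNIV :: bool set))"
abbreviation "Zsp \<equiv> (\<Pi>\<^sub>M p\<in>I2. \<mu>)"
abbreviation "Usp \<equiv> (\<Pi>\<^sub>M i\<in>I1. measure_pmf (pmf_of_set (UNIV :: bool set)))"
abbreviation "Rd \<equiv> distr M Rsp R"
abbreviation "Om \<equiv> Zsp \<Otimes>\<^sub>M Usp \<Otimes>\<^sub>M Rd"

definition Phi where
  "Phi \<omega> = (restrict (\<lambda>p. Z (fst p) (snd p) \<omega>) I2, restrict (\<lambda>i. U i \<omega>) I1, R \<omega>)"

definition Wf where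
  "Wf x = \<A> (restrict (\<lambda>i. fst x (i, fst (snd x) i)) I1) (snd (snd x))"

lemma Phi_meas[measurable]: "Phi \<in> M \<rightarrow>\<^sub>M Om"
proof -
  have "(\<lambda>\<omega>. restrict (\<lambda>p. Z (fst p) (snd p) \<omega>) I2) \<in> M \<rightarrow>\<^sub>M Zsp"
    by (rule measurable_restrict) (auto intro: Z_meas)
  moreover have "(\<lambda>\<omega>. restrict (\<lambda>i. U i \<omega>) I1) \<in> M \<rightarrow>\<^sub>M Usp"
    by (rule measurable_restrict) (auto intro: U_meas simp: measurable_cong_sets[OF refl sets_measure_pmf_count_space])
  moreover have "R \<in> M \<rightarrow>\<^sub>M Rd" using R_meas by (simp add: measurable_cong_sets[OF refl sets_distr])
  ultimately show ?thesis unfolding Phi_def by (intro measurable_Pair) auto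
qed

lemma law: "distr M Om Phi = Om"
proof -
  have "distr M Om Phi = distr M (Zsp \<Otimes>\<^sub>M Usp \<Otimes>\<^sub>M Rsp) Phi"
    by (rule distr_cong[OF refl sets_pair_measure_cong[OF refl sets_pair_measure_cong[OF refl sets_distr]] refl])
  also have "\<dots> = Om" using joint_law unfolding Phi_def .
  finally show ?thesis .
qed

lemma nn_Phi:
  assumes [measurable]: "g \<in> borel_measurable Om"
  shows "(\<integral>\<^sup>+\<omega>. g (Phi \<omega>) \<partial>M) = (\<integral>\<^sup>+x. g x \<partial>Om)"
proof -
  have "integral\<^sup>N (distr M Om Phi) g = (\<integral>\<^sup>+\<omega>. g (Phi \<omega>) \<partial>M)"
    by (rule nn_integral_distr[OF Phi_meas]) (unfold law, rule assms)
  then show ?thesis unfolding law by simp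
qed

lemma sel_meas[measurable]: "(\<lambda>x. restrict (\<lambda>i. fst x (i, fst (snd x) i)) I1) \<in> Om \<rightarrow>\<^sub>M (\<Pi>\<^sub>M i\<in>I1. \<mu>)"
proof (rule measurable_restrict)
  fix i assume i: "i \<in> I1"
  have "(\<lambda>x. fst x (i, fst (snd x) i)) = (\<lambda>x. if fst (snd x) i then fst x (i, True) else fst x (i, False))"
    by (auto simp: fun_eq_iff)
  also have "\<dots> \<in> Om \<rightarrow>\<^sub>M \<mu>"
  proof (rule measurable_If)
    show "(\<lambda>x. fst x (i, True)) \<in> Om \<rightarrow>\<^sub>M \<mu>" "(\<lambda>x. fst x (i, False)) \<in> Om \<rightarrow>\<^sub>M \<mu>"
      by (rule measurable_compose[OF measurable_fst measurable_component_singleton], use i in auto)+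
    have "(\<lambda>x. fst (snd x) i) \<in> Om \<rightarrow>\<^sub>M measure_pmf (pmf_of_set (UNIV :: bool set))"
      by (rule measurable_compose[OF measurable_compose[OF measurable_snd measurable_fst] measurable_component_singleton]) (use i in auto)
    then have "(\<lambda>x. fst (snd x) i) \<in> Om \<rightarrow>\<^sub>M count_space UNIV"
      by (simp add: measurable_cong_sets[OF refl sets_measure_pmf_count_space])
    then show "{x \<in> space Om. fst (snd x) i} \<in> sets Om" by measurable
  qed
  finally show "(\<lambda>x. fst x (i, fst (snd x) i)) \<in> Om \<rightarrow>\<^sub>M \<mu>" .
qed

lemma Wf_meas[measurable]: "Wf \<in> Om \<rightarrow>\<^sub>M Wsp"
proof -
  have "(\<lambda>x. (restrict (\<lambda>i. fst x (i, fst (snd x) i)) I1, snd (snd x))) \<in> Om \<rightarrow>\<^sub>M (\<Pi>\<^sub>M i\<in>I1. \<mu>) \<Otimes>\<^sub>M Rsp"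
    by (intro measurable_Pair sel_meas) (simp add: measurable_cong_sets[OF refl sets_distr])
  from measurable_compose[OF this A_meas] show ?thesis unfolding Wf_def by (simp add: comp_def)
qed

lemma W_Phi: "\<omega> \<in> space M \<Longrightarrow> W \<omega> = Wf (Phi \<omega>)"
  by (simp add: W_def Wf_def Phi_def cong: restrict_cong)

end

context supersample begin

definition swz :: "(nat \<times> bool \<Rightarrow> 'z) \<Rightarrow> (nat \<times> bool \<Rightarrow> 'z)" where
  "swz z = restrict (\<lambda>p. z (fst p, \<not> snd p)) I2"
definition swu :: "(nat \<Rightarrow> bool) \<Rightarrow> (nat \<Rightarrow> bool)" where
  "swu u = restrict (\<lambda>j. \<not> u j) I1"
definition sw where
  "sw x = (swz (fst x), swu (fst (snd x)), snd (snd x))"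

lemma mu_prob: "prob_space \<mu>" by (rule mu)

lemma Zsp_prob: "prob_space Zsp" by (intro prob_space_PiM mu)
lemma Usp_prob: "prob_space Usp" by (intro prob_space_PiM prob_space_measure_pmf)
lemma Rd_prob: "prob_space Rd" by (rule prob_space.prob_space_distr[OF M R_meas])

lemma swz_meas[measurable]: "swz \<in> Zsp \<rightarrow>\<^sub>M Zsp"
  unfolding swz_def by (rule measurable_restrict) (auto intro!: measurable_component_singleton)

lemma swu_meas[measurable]: "swu \<in> Usp \<rightarrow>\<^sub>M Usp"
  unfolding swu_def
proof (rule measurable_restrict)
  fix j assume j: "j \<in> I1"
  have "(\<lambda>u. u j) \<in> Usp \<rightarrow>\<^sub>M count_space UNIV"
    using measurable_component_singleton[OF j, of "\<lambda>_. measure_pmf (pmf_of_set (UNIV :: bool set))"]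
    by (simp add: measurable_cong_sets[OF refl sets_measure_pmf_count_space])
  then show "(\<lambda>u. \<not> u j) \<in> Usp \<rightarrow>\<^sub>M measure_pmf (pmf_of_set UNIV)"
    by (simp add: measurable_cong_sets[OF refl sets_measure_pmf_count_space])
qed

lemma sw_meas[measurable]: "sw \<in> Om \<rightarrow>\<^sub>M Om"
  unfolding sw_def by measurable

lemma dZ: "distr Zsp Zsp swz = Zsp"
proof -
  have "distr (\<Pi>\<^sub>M p\<in>I2. \<mu>) (\<Pi>\<^sub>M p\<in>I2. \<mu>) (\<lambda>\<omega>. \<lambda>q\<in>I2. \<omega> ((\<lambda>p. (fst p, \<not> snd p)) q)) = (\<Pi>\<^sub>M p\<in>I2. \<mu>)"
  proof -
    have fI: "(\<lambda>p. (fst p, \<not> snd p)) \<in> I2 \<rightarrow> I2" by auto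
    have inj: "inj_on (\<lambda>p. (fst p, \<not> snd p)) I2" by (auto simp: inj_on_def)
    show ?thesis using distr_PiM_reindex[of I2 "\<lambda>_. \<mu>", OF mu_prob inj fI] by simp
  qed
  then show ?thesis unfolding swz_def by simp
qed

lemma dU: "distr Usp Usp swu = Usp"
proof -
  let ?p = "pmf_of_set (UNIV :: bool set)"
  have dn: "distr (measure_pmf ?p) (measure_pmf ?p) Not = measure_pmf ?p"
  proof -
    have "distr (measure_pmf ?p) (measure_pmf ?p) Not = distr (measure_pmf ?p) (count_space UNIV) Not"
      by (rule distr_cong) auto
    also have "\<dots> = measure_pmf (map_pmf Not ?p)" by (simp add: map_pmf_rep_eq)
    also have "map_pmf Not ?p = ?p"
    proof -
      have "range Not = (UNIV :: bool set)" by (rule surjI[of Not Not]) simp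
      then show ?thesis by (subst map_pmf_of_set_inj) (auto simp: inj_on_def)
    qed
    finally show ?thesis .
  qed
  have "distr Usp Usp (compose I1 Not) = (\<Pi>\<^sub>M i\<in>I1. distr (measure_pmf ?p) (measure_pmf ?p) Not)"
    by (rule distr_PiM_finite_prob_space') (auto simp: prob_space_measure_pmf measurable_cong_sets[OF sets_measure_pmf_count_space refl])
  moreover have "swu = compose I1 Not" by (auto simp: fun_eq_iff swu_def compose_def)
  ultimately show ?thesis unfolding dn by simp
qed

lemma dOm: "distr Om Om sw = Om"
proof -
  interpret Z: prob_space Zsp by (rule Zsp_prob)
  interpret U: prob_space Usp by (rule Usp_prob)
  interpret Rp: prob_space Rd by (rule Rd_prob)
  interpret UR: pair_prob_space Usp Rd ..
  have dQ: "distr (Usp \<Otimes>\<^sub>M Rd) (Usp \<Otimes>\<^sub>M Rd) (\<lambda>(u, r). (swu u, r)) = Usp \<Otimes>\<^sub>M Rd"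
  proof -
    have "Usp \<Otimes>\<^sub>M Rd = distr Usp Usp swu \<Otimes>\<^sub>M distr Rd Rd (\<lambda>r. r)"
      by (simp only: dU distr_id)
    also have "\<dots> = distr (Usp \<Otimes>\<^sub>M Rd) (Usp \<Otimes>\<^sub>M Rd) (\<lambda>(u, r). (swu u, r))"
      by (rule pair_measure_distr[OF swu_meas measurable_ident_sets[OF refl]]) (unfold distr_id, rule Rp.sigma_finite_measure_axioms)
    finally show ?thesis by simp
  qed
  have "Om = distr Zsp Zsp swz \<Otimes>\<^sub>M distr (Usp \<Otimes>\<^sub>M Rd) (Usp \<Otimes>\<^sub>M Rd) (\<lambda>(u, r). (swu u, r))"
    by (simp only: dZ dQ)
  also have "\<dots> = distr Om Om (\<lambda>(x, y). (swz x, (\<lambda>(u, r). (swu u, r)) y))"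
  proof (rule pair_measure_distr[OF swz_meas])
    show g: "(\<lambda>(u, r). (swu u, r)) \<in> Usp \<Otimes>\<^sub>M Rd \<rightarrow>\<^sub>M Usp \<Otimes>\<^sub>M Rd" by measurable
    show "sigma_finite_measure (distr (Usp \<Otimes>\<^sub>M Rd) (Usp \<Otimes>\<^sub>M Rd) (\<lambda>(u, r). (swu u, r)))"
      unfolding dQ by (rule UR.sigma_finite_measure_axioms)
  qed
  also have "(\<lambda>(x, y). (swz x, (\<lambda>(u, r). (swu u, r)) y)) = sw"
    by (auto simp: sw_def fun_eq_iff)
  finally show ?thesis by simp
qed

lemma sw_inv:
  assumes [measurable]: "g \<in> borel_measurable Om"
  shows "(\<integral>\<^sup>+x. g (sw x) \<partial>Om) = (\<integral>\<^sup>+x. g x \<partial>Om)"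
proof -
  have "integral\<^sup>N (distr Om Om sw) g = (\<integral>\<^sup>+x. g (sw x) \<partial>Om)"
    by (rule nn_integral_distr[OF sw_meas]) (unfold dOm, rule assms)
  then show ?thesis unfolding dOm by simp
qed

end

context supersample begin

definition GnW where "GnW w = (\<integral>\<^sup>+z. ennreal (loss w z) \<partial>\<mu>)"

lemma GnW_meas[measurable]: "GnW \<in> borel_measurable Wsp"
proof -
  interpret mu: prob_space \<mu> by (rule mu)
  have "(\<lambda>(w, z). ennreal (loss w z)) \<in> borel_measurable (Wsp \<Otimes>\<^sub>M \<mu>)"
    using measurable_compose[OF loss_meas measurable_ennreal] by (simp add: comp_def case_prod_beta)
  then show ?thesis unfolding GnW_def by (rule mu.borel_measurable_nn_integral)
qed

lemma loss_comp_meas: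
  assumes "f \<in> N \<rightarrow>\<^sub>M Wsp" "g \<in> N \<rightarrow>\<^sub>M \<mu>"
  shows "(\<lambda>x. loss (f x) (g x)) \<in> borel_measurable N"
  using measurable_compose[OF measurable_Pair[OF assms] loss_meas] by (simp add: comp_def)

lemma comp_z[measurable]: "i \<in> I1 \<Longrightarrow> (\<lambda>x. fst x (i, b)) \<in> Om \<rightarrow>\<^sub>M \<mu>"
  by (rule measurable_compose[OF measurable_fst measurable_component_singleton]) auto

lemma comp_u[measurable]: "i \<in> I1 \<Longrightarrow> (\<lambda>x. fst (snd x) i) \<in> Om \<rightarrow>\<^sub>M count_space UNIV"
proof -
  assume i: "i \<in> I1"
  have "(\<lambda>x. fst (snd x) i) \<in> Om \<rightarrow>\<^sub>M measure_pmf (pmf_of_set (UNIV :: bool set))"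
    by (rule measurable_compose[OF measurable_compose[OF measurable_snd measurable_fst] measurable_component_singleton]) (use i in auto)
  then show ?thesis by (simp add: measurable_cong_sets[OF refl sets_measure_pmf_count_space])
qed

lemma Wf_sw: "x \<in> space Om \<Longrightarrow> Wf (sw x) = Wf x"
  by (auto simp: Wf_def sw_def swz_def swu_def space_pair_measure cong: restrict_cong)

lemma sw_z: "i \<in> I1 \<Longrightarrow> fst (sw x) (i, b) = fst x (i, \<not> b)"
  by (simp add: sw_def swz_def)

lemma sw_u: "i \<in> I1 \<Longrightarrow> fst (snd (sw x)) i = (\<not> fst (snd x) i)"
  by (simp add: sw_def swu_def)

lemma Wf_upd: "i \<in> I1 \<Longrightarrow> \<not> u i \<Longrightarrow> Wf (z((i, True) := y), (u, r)) = Wf (z, (u, r))"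
  by (simp add: Wf_def) (rule arg_cong[where f="\<lambda>s. \<A> s r"], rule restrict_ext, auto)

lemma indep:
  assumes i: "i \<in> I1"
  shows "(\<integral>\<^sup>+x. (if fst (snd x) i then 0 else ennreal (loss (Wf x) (fst x (i, True)))) \<partial>Om)
       = (\<integral>\<^sup>+x. (if fst (snd x) i then 0 else GnW (Wf x)) \<partial>Om)"
proof -
  interpret mu: prob_space \<mu> by (rule mu)
  interpret Z: prob_space Zsp by (rule Zsp_prob)
  interpret U: prob_space Usp by (rule Usp_prob)
  interpret Rp: prob_space Rd by (rule Rd_prob)
  interpret UR: pair_prob_space Usp Rd ..
  interpret Q: prob_space "Usp \<Otimes>\<^sub>M Rd" by (rule UR.prob_space_axioms)
  interpret ZQ: pair_sigma_finite Zsp "Usp \<Otimes>\<^sub>M Rd" ..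
  interpret P: product_prob_space "\<lambda>_. \<mu>" by unfold_locales
  define f1 where "f1 x = (if fst (snd x) i then 0 else ennreal (loss (Wf x) (fst x (i, True))))" for x
  define f2 where "f2 x = (if fst (snd x) i then 0 else GnW (Wf x))" for x
  have Lt: "(\<lambda>x. ennreal (loss (Wf x) (fst x (i, True)))) \<in> borel_measurable Om"
    using measurable_compose[OF loss_comp_meas[OF Wf_meas comp_z[OF i]] measurable_ennreal] by (simp add: comp_def)
  have Gm: "(\<lambda>x. GnW (Wf x)) \<in> borel_measurable Om"
    using measurable_compose[OF Wf_meas GnW_meas] by (simp add: comp_def)
  have "(\<lambda>x. fst (snd x) i) -` {True} \<inter> space Om \<in> sets Om" by (rule measurable_sets[OF comp_u[OF i]]) simp
  moreover have "(\<lambda>x. fst (snd x) i) -` {True} \<inter> space Om = {x \<in> space Om. fst (snd x) i}" by auto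
  ultimately have us: "{x \<in> space Om. fst (snd x) i} \<in> sets Om" by simp
  have f1m[measurable]: "f1 \<in> borel_measurable Om" unfolding f1_def
    by (intro measurable_If measurable_const Lt us) simp
  have f2m[measurable]: "f2 \<in> borel_measurable Om" unfolding f2_def
    by (intro measurable_If measurable_const Gm us) simp
  define a where "a = (i, True)"
  define J where "J = I2 - {a}"
  have IJ: "I2 = insert a J" "a \<notin> J" "finite J" using i by (auto simp: a_def J_def)
  have inner: "(\<integral>\<^sup>+z. f1 (z, q) \<partial>Zsp) = (\<integral>\<^sup>+z. f2 (z, q) \<partial>Zsp)" if q: "q \<in> space (Usp \<Otimes>\<^sub>M Rd)" for q
  proof (cases "fst q i")
    case True then show ?thesis by (simp add: f1_def f2_def)
  next
    case False
    obtain u r where qur: "q = (u, r)" by (cases q)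
    have m1: "(\<lambda>z. f1 (z, q)) \<in> borel_measurable (Pi\<^sub>M (insert a J) (\<lambda>_. \<mu>))"
      using measurable_compose[OF measurable_Pair2'[OF q] f1m] unfolding IJ(1)[symmetric] by (simp add: comp_def)
    have m2: "(\<lambda>z. f2 (z, q)) \<in> borel_measurable (Pi\<^sub>M (insert a J) (\<lambda>_. \<mu>))"
      using measurable_compose[OF measurable_Pair2'[OF q] f2m] unfolding IJ(1)[symmetric] by (simp add: comp_def)
    have "(\<integral>\<^sup>+z. f1 (z, q) \<partial>Zsp) = (\<integral>\<^sup>+x. (\<integral>\<^sup>+y. f1 (x(a := y), q) \<partial>\<mu>) \<partial>Pi\<^sub>M J (\<lambda>_. \<mu>))"
      unfolding IJ(1) by (rule P.product_nn_integral_insert[OF IJ(3) IJ(2) m1])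
    also have "\<dots> = (\<integral>\<^sup>+x. GnW (Wf (x, q)) \<partial>Pi\<^sub>M J (\<lambda>_. \<mu>))"
      using False i by (intro nn_integral_cong) (simp add: f1_def GnW_def qur a_def Wf_upd)
    also have "\<dots> = (\<integral>\<^sup>+x. (\<integral>\<^sup>+y. f2 (x(a := y), q) \<partial>\<mu>) \<partial>Pi\<^sub>M J (\<lambda>_. \<mu>))"
      using False i by (intro nn_integral_cong) (simp add: f2_def qur a_def Wf_upd mu.emeasure_space_1)
    also have "\<dots> = (\<integral>\<^sup>+z. f2 (z, q) \<partial>Zsp)"
      unfolding IJ(1) by (rule P.product_nn_integral_insert[OF IJ(3) IJ(2) m2, symmetric])
    finally show ?thesis .
  qed
  have "(\<integral>\<^sup>+x. f1 x \<partial>Om) = (\<integral>\<^sup>+q. (\<integral>\<^sup>+z. f1 (z, q) \<partial>Zsp) \<partial>(Usp \<Otimes>\<^sub>M Rd))"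
    by (rule ZQ.nn_integral_snd[symmetric]) measurable
  also have "\<dots> = (\<integral>\<^sup>+q. (\<integral>\<^sup>+z. f2 (z, q) \<partial>Zsp) \<partial>(Usp \<Otimes>\<^sub>M Rd))"
    by (intro nn_integral_cong inner)
  also have "\<dots> = (\<integral>\<^sup>+x. f2 x \<partial>Om)"
    by (rule ZQ.nn_integral_snd) measurable
  finally show ?thesis unfolding f1_def f2_def .
qed

lemma us_sets: "i \<in> I1 \<Longrightarrow> {x \<in> space Om. fst (snd x) i} \<in> sets Om"
proof -
  assume i: "i \<in> I1"
  have "(\<lambda>x. fst (snd x) i) -` {True} \<inter> space Om \<in> sets Om" by (rule measurable_sets[OF comp_u[OF i]]) simp
  moreover have "(\<lambda>x. fst (snd x) i) -` {True} \<inter> space Om = {x \<in> space Om. fst (snd x) i}" by auto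
  ultimately show ?thesis by simp
qed

lemma Ltr_meas: "i \<in> I1 \<Longrightarrow> (\<lambda>x. ennreal (loss (Wf x) (fst x (i, fst (snd x) i)))) \<in> borel_measurable Om"
proof -
  assume i: "i \<in> I1"
  have "(\<lambda>x. fst x (i, fst (snd x) i)) \<in> Om \<rightarrow>\<^sub>M \<mu>"
    using measurable_compose[OF sel_meas measurable_component_singleton[OF i]] i by (simp add: comp_def)
  from measurable_compose[OF loss_comp_meas[OF Wf_meas this] measurable_ennreal] show ?thesis by (simp add: comp_def)
qed

lemma Lz_meas: "i \<in> I1 \<Longrightarrow> (\<lambda>x. ennreal (loss (Wf x) (fst x (i, b)))) \<in> borel_measurable Om"
  using measurable_compose[OF loss_comp_meas[OF Wf_meas comp_z] measurable_ennreal] by (simp add: comp_def)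

lemma G_meas: "(\<lambda>x. GnW (Wf x)) \<in> borel_measurable Om"
  using measurable_compose[OF Wf_meas GnW_meas] by (simp add: comp_def)

lemma ident_b:
  assumes i: "i \<in> I1"
  shows "(\<integral>\<^sup>+x. ennreal (loss (Wf x) (fst x (i, fst (snd x) i))) \<partial>Om)
       = 2 * (\<integral>\<^sup>+x. (if fst (snd x) i then 0 else ennreal (loss (Wf x) (fst x (i, False)))) \<partial>Om)"
proof -
  define L where "L x = ennreal (loss (Wf x) (fst x (i, fst (snd x) i)))" for x :: "(nat \<times> bool \<Rightarrow> 'z) \<times> (nat \<Rightarrow> bool) \<times> 'r"
  define g1 where "g1 x = (if fst (snd x) i then L x else 0)" for x
  define g0 where "g0 x = (if fst (snd x) i then 0 else L x)" for x
  have Lm: "L \<in> borel_measurable Om" unfolding L_def by (rule Ltr_meas[OF i])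
  have g1m: "g1 \<in> borel_measurable Om" unfolding g1_def by (intro measurable_If measurable_const Lm us_sets[OF i]) simp
  have g0m: "g0 \<in> borel_measurable Om" unfolding g0_def by (intro measurable_If measurable_const Lm us_sets[OF i]) simp
  have "(\<integral>\<^sup>+x. L x \<partial>Om) = (\<integral>\<^sup>+x. g1 x + g0 x \<partial>Om)"
    by (intro nn_integral_cong) (simp add: g1_def g0_def)
  also have "\<dots> = (\<integral>\<^sup>+x. g1 x \<partial>Om) + (\<integral>\<^sup>+x. g0 x \<partial>Om)"
    by (rule nn_integral_add[OF g1m g0m])
  also have "(\<integral>\<^sup>+x. g1 x \<partial>Om) = (\<integral>\<^sup>+x. g1 (sw x) \<partial>Om)" by (rule sw_inv[OF g1m, symmetric])
  also have "\<dots> = (\<integral>\<^sup>+x. g0 x \<partial>Om)"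
    by (intro nn_integral_cong) (simp add: g1_def g0_def L_def Wf_sw sw_u[OF i] sw_z[OF i])
  finally have "(\<integral>\<^sup>+x. L x \<partial>Om) = 2 * (\<integral>\<^sup>+x. g0 x \<partial>Om)" by (simp add: mult_2)
  also have "(\<integral>\<^sup>+x. g0 x \<partial>Om) = (\<integral>\<^sup>+x. (if fst (snd x) i then 0 else ennreal (loss (Wf x) (fst x (i, False)))) \<partial>Om)"
    by (intro nn_integral_cong) (simp add: g0_def L_def)
  finally show ?thesis unfolding L_def .
qed

lemma ident_a:
  assumes i: "i \<in> I1"
  shows "(\<integral>\<^sup>+x. GnW (Wf x) \<partial>Om)
       = 2 * (\<integral>\<^sup>+x. (if fst (snd x) i then ennreal (loss (Wf x) (fst x (i, False))) else 0) \<partial>Om)"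
proof -
  define G1 where "G1 x = (if fst (snd x) i then GnW (Wf x) else 0)" for x
  define G0 where "G0 x = (if fst (snd x) i then 0 else GnW (Wf x))" for x
  define g where "g x = (if fst (snd x) i then 0 else ennreal (loss (Wf x) (fst x (i, True))))" for x
  have G1m: "G1 \<in> borel_measurable Om" unfolding G1_def by (intro measurable_If measurable_const G_meas us_sets[OF i]) simp
  have G0m: "G0 \<in> borel_measurable Om" unfolding G0_def by (intro measurable_If measurable_const G_meas us_sets[OF i]) simp
  have gm: "g \<in> borel_measurable Om" unfolding g_def by (intro measurable_If measurable_const Lz_meas[OF i] us_sets[OF i]) simp
  have "(\<integral>\<^sup>+x. GnW (Wf x) \<partial>Om) = (\<integral>\<^sup>+x. G1 x + G0 x \<partial>Om)"
    by (intro nn_integral_cong) (simp add: G1_def G0_def)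
  also have "\<dots> = (\<integral>\<^sup>+x. G1 x \<partial>Om) + (\<integral>\<^sup>+x. G0 x \<partial>Om)"
    by (rule nn_integral_add[OF G1m G0m])
  also have "(\<integral>\<^sup>+x. G1 x \<partial>Om) = (\<integral>\<^sup>+x. G1 (sw x) \<partial>Om)" by (rule sw_inv[OF G1m, symmetric])
  also have "\<dots> = (\<integral>\<^sup>+x. G0 x \<partial>Om)"
    by (intro nn_integral_cong) (simp add: G1_def G0_def Wf_sw sw_u[OF i])
  finally have "(\<integral>\<^sup>+x. GnW (Wf x) \<partial>Om) = 2 * (\<integral>\<^sup>+x. G0 x \<partial>Om)" by (simp add: mult_2)
  also have "(\<integral>\<^sup>+x. G0 x \<partial>Om) = (\<integral>\<^sup>+x. g x \<partial>Om)"
    unfolding G0_def g_def by (rule indep[OF i, symmetric])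
  also have "\<dots> = (\<integral>\<^sup>+x. g (sw x) \<partial>Om)" by (rule sw_inv[OF gm, symmetric])
  also have "\<dots> = (\<integral>\<^sup>+x. (if fst (snd x) i then ennreal (loss (Wf x) (fst x (i, False))) else 0) \<partial>Om)"
    by (intro nn_integral_cong) (simp add: g_def Wf_sw sw_u[OF i] sw_z[OF i])
  finally show ?thesis .
qed

end

lemma int_eq_from_nn:
  fixes f g :: "'a \<Rightarrow> real"
  assumes "integrable M f" "integrable M g" "AE x in M. 0 \<le> f x" "AE x in M. 0 \<le> g x"
    and "(\<integral>\<^sup>+x. ennreal (f x) \<partial>M) = (\<integral>\<^sup>+x. ennreal (g x) \<partial>M)"
  shows "(\<integral>x. f x \<partial>M) = (\<integral>x. g x \<partial>M)"
proof -
  have "ennreal (\<integral>x. f x \<partial>M) = ennreal (\<integral>x. g x \<partial>M)"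
    using assms by (simp add: nn_integral_eq_integral[symmetric])
  moreover have "0 \<le> (\<integral>x. f x \<partial>M)" "0 \<le> (\<integral>x. g x \<partial>M)"
    using assms by (auto intro: integral_nonneg_AE)
  ultimately show ?thesis by simp
qed

lemma amgm_pt:
  fixes l x y :: real assumes l: "0 < l"
  shows "x * y \<le> (l * x^2 + y^2 / l) / 2"
proof -
  have "0 \<le> (l*x - y)^2" by simp
  then have "2*l*(x*y) \<le> l*(l*x^2) + y^2" by (simp add: power2_eq_square algebra_simps)
  then have "2*(x*y) \<le> l*x^2 + y^2/l" using l by (simp add: field_simps power2_eq_square)
  then show ?thesis by simp
qed

lemma step_bound:
  fixes M :: "'a measure" and U :: "'a \<Rightarrow> bool" and T V :: "'a \<Rightarrow> real" and L0 :: "'a \<Rightarrow> real"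
  assumes M: "prob_space M"
    and Um[measurable]: "U \<in> M \<rightarrow>\<^sub>M count_space UNIV"
    and half: "emeasure M {\<omega>\<in>space M. U \<omega>} = ennreal (1/2)"
    and TmS: "T \<in> M \<rightarrow>\<^sub>M restrict_space borel {0..}" and VmS: "V \<in> M \<rightarrow>\<^sub>M restrict_space borel {0..}"
    and intT: "integrable M (\<lambda>\<omega>. (if U \<omega> then 1 else -1) * T \<omega>)"
    and intV: "integrable M (\<lambda>\<omega>. (if U \<omega> then 1 else -1) * V \<omega>)"
    and ci: "cond_indep M ((\<Pi>\<^sub>M t\<in>space (restrict_space borel {0..}). borel) \<Otimes>\<^sub>M restrict_space borel {0..})
        (\<lambda>w. (restrict (\<lambda>t::real. (if U w then 1 else -1) * t) (space (restrict_space borel {0..})), L0 w))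
        (restrict_space borel {0..}) V (restrict_space borel {0..}) T"
  shows "ereal ((\<integral>\<omega>. (if U \<omega> then 1 else -1) * T \<omega> \<partial>M) - (\<integral>\<omega>. (if U \<omega> then 1 else -1) * V \<omega> \<partial>M))
     \<le> enn2ereal (ennsqrt (2 * (\<integral>\<^sup>+\<omega>. ennreal ((T \<omega> - V \<omega>)\<^sup>2) \<partial>M)
           * ennreal (prob_space.mutual_information M (exp 1) (restrict_space borel {0..}) (count_space UNIV) T U)))"
proof -
  interpret prob_space M by fact
  define S :: "real measure" where "S = restrict_space borel {0..}"
  have spS: "space S = {0..}" by (simp add: S_def)
  have Tm[measurable]: "T \<in> borel_measurable M" and Tnn: "\<And>\<omega>. \<omega> \<in> space M \<Longrightarrow> 0 \<le> T \<omega>"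
    using TmS by (auto simp: measurable_restrict_space2_iff)
  have Vm[measurable]: "V \<in> borel_measurable M" and Vnn: "\<And>\<omega>. \<omega> \<in> space M \<Longrightarrow> 0 \<le> V \<omega>"
    using VmS by (auto simp: measurable_restrict_space2_iff)
  have TmS'[measurable]: "T \<in> M \<rightarrow>\<^sub>M S" using TmS by (simp add: S_def)
  obtain h where hm[measurable]: "h \<in> borel_measurable S" and hb: "\<And>t. t \<in> space S \<Longrightarrow> 0 \<le> h t \<and> h t \<le> 1"
    and h1: "\<And>A. A \<in> sets S \<Longrightarrow> emeasure M {\<omega>\<in>space M. T \<omega> \<in> A \<and> U \<omega>}
        = (\<integral>\<^sup>+t. indicator A t * ennreal (h t) \<partial>distr M S T)"
    and h0: "\<And>A. A \<in> sets S \<Longrightarrow> emeasure M {\<omega>\<in>space M. T \<omega> \<in> A \<and> \<not> U \<omega>}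
        = (\<integral>\<^sup>+t. indicator A t * ennreal (1 - h t) \<partial>distr M S T)"
    using split_density[OF M TmS' Um] by blast
  have MIle: "(\<integral>\<omega>. (2 * h (T \<omega>) - 1)^2 \<partial>M) \<le> 2 * mutual_information (exp 1) S (count_space UNIV) T U"
    by (rule mi_lower[OF M TmS' Um half hm hb h1 h0])
  have hT[measurable]: "(\<lambda>\<omega>. h (T \<omega>)) \<in> borel_measurable M" by measurable
  have hTb: "0 \<le> h (T \<omega>) \<and> h (T \<omega>) \<le> 1" if "\<omega> \<in> space M" for \<omega>
    using hb measurable_space[OF TmS' that] by auto
  define u where "u \<omega> = (if U \<omega> then 1 else 0 :: real)" for \<omega>
  have um[measurable]: "u \<in> borel_measurable M" unfolding u_def by measurable
  have intT0: "integrable M T"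
    by (rule Bochner_Integration.integrable_bound[OF intT]) auto
  have intV0: "integrable M V"
    by (rule Bochner_Integration.integrable_bound[OF intV]) auto
  have TsS: "T \<in> space M \<rightarrow> space S" using measurable_space[OF TmS'] by auto
  have eqT: "(\<integral>\<^sup>+\<omega>. ennreal (u \<omega>) * indicator B (T \<omega>) \<partial>M) = (\<integral>\<^sup>+\<omega>. ennreal (h (T \<omega>)) * indicator B (T \<omega>) \<partial>M)"
    if B: "B \<in> sets S" for B
  proof -
    note [measurable] = B
    have "(\<integral>\<^sup>+\<omega>. ennreal (u \<omega>) * indicator B (T \<omega>) \<partial>M) = (\<integral>\<^sup>+\<omega>. indicator {\<omega>\<in>space M. T \<omega> \<in> B \<and> U \<omega>} \<omega> \<partial>M)"
      by (intro nn_integral_cong) (auto simp: u_def split: split_indicator)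
    also have "\<dots> = emeasure M {\<omega>\<in>space M. T \<omega> \<in> B \<and> U \<omega>}"
      by (intro nn_integral_indicator) measurable
    also have "\<dots> = (\<integral>\<^sup>+t. indicator B t * ennreal (h t) \<partial>distr M S T)" by (rule h1[OF B])
    also have "\<dots> = (\<integral>\<^sup>+\<omega>. ennreal (h (T \<omega>)) * indicator B (T \<omega>) \<partial>M)"
      by (subst nn_integral_distr) (auto simp: mult.commute)
    finally show ?thesis .
  qed
  define F where "F = vimage_algebra (space M) T S"
  have subF: "subalgebra M F"
    unfolding subalgebra_def F_def using TsS
    by (auto simp: sets_vimage_algebra2 intro!: measurable_sets[OF TmS'])
  interpret F: finite_measure_subalgebra M F
    unfolding finite_measure_subalgebra_def finite_measure_subalgebra_axioms_def
    using subF finite_measure_axioms by simp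
  have TF: "T \<in> F \<rightarrow>\<^sub>M S" unfolding F_def using TsS by (rule measurable_vimage_algebra1)
  have hTF[measurable]: "(\<lambda>\<omega>. h (T \<omega>)) \<in> borel_measurable F"
    using measurable_compose[OF TF hm] by (simp add: comp_def)
  have int_u: "integrable M u" by (rule integrable_const_bound[where B=1]) (auto simp: u_def)
  have int_hT: "integrable M (\<lambda>\<omega>. h (T \<omega>))"
    by (rule integrable_const_bound[where B=1]) (use hTb in auto)
  have ce_u: "AE \<omega> in M. real_cond_exp M F u \<omega> = h (T \<omega>)"
  proof (rule F.real_cond_exp_charact)
    fix A assume "A \<in> sets F"
    then obtain B where B: "B \<in> sets S" and A: "A = T -` B \<inter> space M"
      unfolding F_def using sets_vimage_algebra2[OF TsS] by auto
    note [measurable] = B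
    have "(\<integral>\<omega>. u \<omega> * indicator B (T \<omega>) \<partial>M) = (\<integral>\<omega>. h (T \<omega>) * indicator B (T \<omega>) \<partial>M)"
    proof (rule int_eq_from_nn)
      show "integrable M (\<lambda>\<omega>. u \<omega> * indicator B (T \<omega>))"
        by (rule integrable_const_bound[where B=1]) (auto simp: u_def split: split_indicator)
      show "integrable M (\<lambda>\<omega>. h (T \<omega>) * indicator B (T \<omega>))"
        by (rule integrable_const_bound[where B=1]) (use hTb in \<open>auto split: split_indicator\<close>)
      show "AE x in M. 0 \<le> u x * indicator B (T x)" by (auto simp: u_def)
      show "AE x in M. 0 \<le> h (T x) * indicator B (T x)" using hTb by auto
      show "(\<integral>\<^sup>+x. ennreal (u x * indicator B (T x)) \<partial>M) = (\<integral>\<^sup>+x. ennreal (h (T x) * indicator B (T x)) \<partial>M)"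
      proof -
        have "(\<integral>\<^sup>+x. ennreal (u x * indicator B (T x)) \<partial>M) = (\<integral>\<^sup>+x. ennreal (u x) * indicator B (T x) \<partial>M)"
          by (intro nn_integral_cong) (auto simp: u_def indicator_def)
        also have "\<dots> = (\<integral>\<^sup>+x. ennreal (h (T x)) * indicator B (T x) \<partial>M)" by (rule eqT[OF B])
        also have "\<dots> = (\<integral>\<^sup>+x. ennreal (h (T x) * indicator B (T x)) \<partial>M)"
          by (intro nn_integral_cong) (use hTb in \<open>auto simp: indicator_def\<close>)
        finally show ?thesis .
      qed
    qed
    then show "(\<integral>\<omega>\<in>A. u \<omega> \<partial>M) = (\<integral>\<omega>\<in>A. h (T \<omega>) \<partial>M)"
      unfolding set_lebesgue_integral_def A
      by (simp add: indicator_def mult.commute cong: Bochner_Integration.integral_cong)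
  qed (use int_u int_hT in auto)
  define PX where "PX = (\<Pi>\<^sub>M t\<in>space S. (borel :: real measure))"
  define Xp where "Xp w = restrict (\<lambda>t. (if U w then 1 else -1) * t) (space S)" for w
  have ci': "cond_indep M (PX \<Otimes>\<^sub>M S) (\<lambda>w. (Xp w, L0 w)) S V S T"
    using ci unfolding PX_def Xp_def S_def .
  have XLm[measurable]: "(\<lambda>w. (Xp w, L0 w)) \<in> M \<rightarrow>\<^sub>M PX \<Otimes>\<^sub>M S"
    and ciAE: "\<And>A B. A \<in> sets (PX \<Otimes>\<^sub>M S) \<Longrightarrow> B \<in> sets S \<Longrightarrow> AE \<omega> in M.
        real_cond_exp M F (\<lambda>w. indicator A (Xp w, L0 w) * indicator B (V w)) \<omega> =
        real_cond_exp M F (\<lambda>w. indicator A (Xp w, L0 w)) \<omega> *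
        real_cond_exp M F (\<lambda>w. indicator B (V w)) \<omega>"
    using ci' unfolding cond_indep_def F_def by auto
  have VmS'[measurable]: "V \<in> M \<rightarrow>\<^sub>M S" using VmS by (simp add: S_def)
  define A0 where "A0 = {x\<in>space PX. x 1 = (1::real)} \<times> space S"
  have c1: "(\<lambda>x. x 1) \<in> PX \<rightarrow>\<^sub>M (borel :: real measure)"
    unfolding PX_def by (rule measurable_component_singleton) (simp add: spS)
  have "{x\<in>space PX. x 1 = (1::real)} = (\<lambda>x. x 1) -` {1} \<inter> space PX" by auto
  then have "{x\<in>space PX. x 1 = (1::real)} \<in> sets PX" using measurable_sets[OF c1, of "{1}"] by simp
  then have A0s[measurable]: "A0 \<in> sets (PX \<Otimes>\<^sub>M S)" unfolding A0_def by (intro pair_measureI) auto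
  have A0u: "indicator A0 (Xp \<omega>, L0 \<omega>) = u \<omega>" if "\<omega> \<in> space M" for \<omega>
  proof -
    have "(Xp \<omega>, L0 \<omega>) \<in> space (PX \<Otimes>\<^sub>M S)" using measurable_space[OF XLm that] .
    moreover have "Xp \<omega> 1 = (if U \<omega> then 1 else -1)" by (simp add: Xp_def spS)
    ultimately show ?thesis by (auto simp: A0_def u_def space_pair_measure indicator_def)
  qed
  have cem[measurable]: "real_cond_exp M F f \<in> borel_measurable M" for f
    by (rule measurable_from_subalg[OF F.subalg]) simp
  have eqVb: "(\<integral>\<omega>. u \<omega> * indicator B (V \<omega>) \<partial>M) = (\<integral>\<omega>. h (T \<omega>) * indicator B (V \<omega>) \<partial>M)"
    if B: "B \<in> sets S" for B
  proof -
    note [measurable] = B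
    have int1: "integrable M (\<lambda>\<omega>. u \<omega> * indicator B (V \<omega>))"
      by (rule integrable_const_bound[where B=1]) (auto simp: u_def split: split_indicator)
    have ae1: "AE \<omega> in M. real_cond_exp M F (\<lambda>w. indicator A0 (Xp w, L0 w) * indicator B (V w)) \<omega>
                = real_cond_exp M F (\<lambda>w. u w * indicator B (V w)) \<omega>"
      by (rule F.real_cond_exp_cong) (auto simp: A0u)
    have ae2: "AE \<omega> in M. real_cond_exp M F (\<lambda>w. indicator A0 (Xp w, L0 w)) \<omega> = real_cond_exp M F u \<omega>"
      by (rule F.real_cond_exp_cong) (auto simp: A0u)
    have intc: "integrable M (real_cond_exp M F u)" using F.real_cond_exp_int(1)[OF int_u] .
    have intc2: "integrable M (\<lambda>\<omega>. real_cond_exp M F u \<omega> * indicator B (V \<omega>))"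
      by (rule Bochner_Integration.integrable_bound[OF intc]) (auto simp: indicator_def)
    have "(\<integral>\<omega>. u \<omega> * indicator B (V \<omega>) \<partial>M) = (\<integral>\<omega>. real_cond_exp M F (\<lambda>w. u w * indicator B (V w)) \<omega> \<partial>M)"
      using F.real_cond_exp_int(2)[OF int1] by simp
    also have "\<dots> = (\<integral>\<omega>. real_cond_exp M F u \<omega> * real_cond_exp M F (\<lambda>w. indicator B (V w)) \<omega> \<partial>M)"
      using ciAE[OF A0s B] ae1 ae2 by (intro integral_cong_AE) auto
    also have "\<dots> = (\<integral>\<omega>. real_cond_exp M F u \<omega> * indicator B (V \<omega>) \<partial>M)"
      by (rule F.real_cond_exp_intg(2)) (use intc2 in auto)
    also have "\<dots> = (\<integral>\<omega>. h (T \<omega>) * indicator B (V \<omega>) \<partial>M)"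
      using ce_u by (intro integral_cong_AE) auto
    finally show ?thesis .
  qed
  have eqV: "(\<integral>\<^sup>+\<omega>. ennreal (u \<omega>) * indicator B (V \<omega>) \<partial>M) = (\<integral>\<^sup>+\<omega>. ennreal (h (T \<omega>)) * indicator B (V \<omega>) \<partial>M)"
    if B: "B \<in> sets S" for B
  proof -
    note [measurable] = B
    have "(\<integral>\<^sup>+\<omega>. ennreal (u \<omega>) * indicator B (V \<omega>) \<partial>M) = (\<integral>\<^sup>+\<omega>. ennreal (u \<omega> * indicator B (V \<omega>)) \<partial>M)"
      by (intro nn_integral_cong) (auto simp: u_def indicator_def)
    also have "\<dots> = ennreal (\<integral>\<omega>. u \<omega> * indicator B (V \<omega>) \<partial>M)"
      by (rule nn_integral_eq_integral) (auto intro!: integrable_const_bound[where B=1] simp: u_def split: split_indicator)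
    also have "\<dots> = ennreal (\<integral>\<omega>. h (T \<omega>) * indicator B (V \<omega>) \<partial>M)" using eqVb[OF B] by simp
    also have "\<dots> = (\<integral>\<^sup>+\<omega>. ennreal (h (T \<omega>) * indicator B (V \<omega>)) \<partial>M)"
      by (rule nn_integral_eq_integral[symmetric]) (use hTb in \<open>auto intro!: integrable_const_bound[where B=1] split: split_indicator\<close>)
    also have "\<dots> = (\<integral>\<^sup>+\<omega>. ennreal (h (T \<omega>)) * indicator B (V \<omega>) \<partial>M)"
      by (intro nn_integral_cong) (use hTb in \<open>auto simp: indicator_def\<close>)
    finally show ?thesis .
  qed
  have id_m: "(\<lambda>x::real. ennreal x) \<in> borel_measurable S"
    unfolding S_def by (intro measurable_restrict_space1) measurable
  have KT: "(\<integral>\<^sup>+\<omega>. ennreal (u \<omega>) * ennreal (T \<omega>) \<partial>M) = (\<integral>\<^sup>+\<omega>. ennreal (h (T \<omega>)) * ennreal (T \<omega>) \<partial>M)"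
    by (rule nn_transfer[OF TmS' _ _ eqT id_m]) auto
  have KV: "(\<integral>\<^sup>+\<omega>. ennreal (u \<omega>) * ennreal (V \<omega>) \<partial>M) = (\<integral>\<^sup>+\<omega>. ennreal (h (T \<omega>)) * ennreal (V \<omega>) \<partial>M)"
    by (rule nn_transfer[OF VmS' _ _ eqV id_m]) auto
  have iuT: "integrable M (\<lambda>\<omega>. u \<omega> * T \<omega>)" "integrable M (\<lambda>\<omega>. h (T \<omega>) * T \<omega>)"
    by (auto intro!: Bochner_Integration.integrable_bound[OF intT0]
          AE_I2 mult_left_le_one_le simp: u_def abs_mult hTb)
  have iuV: "integrable M (\<lambda>\<omega>. u \<omega> * V \<omega>)" "integrable M (\<lambda>\<omega>. h (T \<omega>) * V \<omega>)"
    by (auto intro!: Bochner_Integration.integrable_bound[OF intV0]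
          AE_I2 mult_left_le_one_le simp: u_def abs_mult hTb)
  have eq_uT: "(\<integral>\<omega>. u \<omega> * T \<omega> \<partial>M) = (\<integral>\<omega>. h (T \<omega>) * T \<omega> \<partial>M)"
  proof (rule int_eq_from_nn[OF iuT])
    show "AE x in M. 0 \<le> u x * T x" "AE x in M. 0 \<le> h (T x) * T x" using hTb Tnn by (auto simp: u_def)
    have "(\<integral>\<^sup>+x. ennreal (u x * T x) \<partial>M) = (\<integral>\<^sup>+\<omega>. ennreal (u \<omega>) * ennreal (T \<omega>) \<partial>M)"
      using Tnn by (intro nn_integral_cong) (auto simp: u_def ennreal_mult)
    also have "\<dots> = (\<integral>\<^sup>+\<omega>. ennreal (h (T \<omega>)) * ennreal (T \<omega>) \<partial>M)" by (rule KT)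
    also have "\<dots> = (\<integral>\<^sup>+x. ennreal (h (T x) * T x) \<partial>M)"
      using Tnn hTb by (intro nn_integral_cong) (auto simp: ennreal_mult)
    finally show "(\<integral>\<^sup>+x. ennreal (u x * T x) \<partial>M) = (\<integral>\<^sup>+x. ennreal (h (T x) * T x) \<partial>M)" .
  qed
  have eq_uV: "(\<integral>\<omega>. u \<omega> * V \<omega> \<partial>M) = (\<integral>\<omega>. h (T \<omega>) * V \<omega> \<partial>M)"
  proof (rule int_eq_from_nn[OF iuV])
    show "AE x in M. 0 \<le> u x * V x" "AE x in M. 0 \<le> h (T x) * V x" using hTb Vnn by (auto simp: u_def)
    have "(\<integral>\<^sup>+x. ennreal (u x * V x) \<partial>M) = (\<integral>\<^sup>+\<omega>. ennreal (u \<omega>) * ennreal (V \<omega>) \<partial>M)"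
      using Vnn by (intro nn_integral_cong) (auto simp: u_def ennreal_mult)
    also have "\<dots> = (\<integral>\<^sup>+\<omega>. ennreal (h (T \<omega>)) * ennreal (V \<omega>) \<partial>M)" by (rule KV)
    also have "\<dots> = (\<integral>\<^sup>+x. ennreal (h (T x) * V x) \<partial>M)"
      using Vnn hTb by (intro nn_integral_cong) (auto simp: ennreal_mult)
    finally show "(\<integral>\<^sup>+x. ennreal (u x * V x) \<partial>M) = (\<integral>\<^sup>+x. ennreal (h (T x) * V x) \<partial>M)" .
  qed
  define a where "a \<omega> = 2 * h (T \<omega>) - 1" for \<omega>
  define D where "D \<omega> = T \<omega> - V \<omega>" for \<omega>
  have am[measurable]: "a \<in> borel_measurable M" unfolding a_def by measurable
  have Dm[measurable]: "D \<in> borel_measurable M" unfolding D_def by measurable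
  have ab: "\<bar>a \<omega>\<bar> \<le> 1" if "\<omega> \<in> space M" for \<omega> using hTb[OF that] by (auto simp: a_def)
  have intD: "integrable M D" unfolding D_def using intT0 intV0 by auto
  have intaD: "integrable M (\<lambda>\<omega>. a \<omega> * D \<omega>)"
    by (rule Bochner_Integration.integrable_bound[OF intD]) (auto intro!: AE_I2 mult_left_le_one_le simp: abs_mult ab)
  have E1: "(\<integral>\<omega>. (if U \<omega> then 1 else -1) * T \<omega> \<partial>M) = (\<integral>\<omega>. a \<omega> * T \<omega> \<partial>M)"
  proof -
    have "(\<integral>\<omega>. (if U \<omega> then 1 else -1) * T \<omega> \<partial>M) = (\<integral>\<omega>. 2 * (u \<omega> * T \<omega>) - T \<omega> \<partial>M)"
      by (intro Bochner_Integration.integral_cong) (auto simp: u_def)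
    also have "\<dots> = 2 * (\<integral>\<omega>. u \<omega> * T \<omega> \<partial>M) - (\<integral>\<omega>. T \<omega> \<partial>M)"
      using iuT intT0 by simp
    also have "\<dots> = 2 * (\<integral>\<omega>. h (T \<omega>) * T \<omega> \<partial>M) - (\<integral>\<omega>. T \<omega> \<partial>M)" by (simp add: eq_uT)
    also have "\<dots> = (\<integral>\<omega>. 2 * (h (T \<omega>) * T \<omega>) - T \<omega> \<partial>M)"
      using iuT intT0 by simp
    also have "\<dots> = (\<integral>\<omega>. a \<omega> * T \<omega> \<partial>M)"
      by (intro Bochner_Integration.integral_cong) (auto simp: a_def algebra_simps)
    finally show ?thesis .
  qed
  have E2: "(\<integral>\<omega>. (if U \<omega> then 1 else -1) * V \<omega> \<partial>M) = (\<integral>\<omega>. a \<omega> * V \<omega> \<partial>M)"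
  proof -
    have "(\<integral>\<omega>. (if U \<omega> then 1 else -1) * V \<omega> \<partial>M) = (\<integral>\<omega>. 2 * (u \<omega> * V \<omega>) - V \<omega> \<partial>M)"
      by (intro Bochner_Integration.integral_cong) (auto simp: u_def)
    also have "\<dots> = 2 * (\<integral>\<omega>. u \<omega> * V \<omega> \<partial>M) - (\<integral>\<omega>. V \<omega> \<partial>M)"
      using iuV intV0 by simp
    also have "\<dots> = 2 * (\<integral>\<omega>. h (T \<omega>) * V \<omega> \<partial>M) - (\<integral>\<omega>. V \<omega> \<partial>M)" by (simp add: eq_uV)
    also have "\<dots> = (\<integral>\<omega>. 2 * (h (T \<omega>) * V \<omega>) - V \<omega> \<partial>M)"
      using iuV intV0 by simp
    also have "\<dots> = (\<integral>\<omega>. a \<omega> * V \<omega> \<partial>M)"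
      by (intro Bochner_Integration.integral_cong) (auto simp: a_def algebra_simps)
    finally show ?thesis .
  qed
  have iaT: "integrable M (\<lambda>\<omega>. a \<omega> * T \<omega>)"
    by (auto intro!: Bochner_Integration.integrable_bound[OF intT0] AE_I2 mult_left_le_one_le simp: abs_mult ab)
  have iaV: "integrable M (\<lambda>\<omega>. a \<omega> * V \<omega>)"
    by (auto intro!: Bochner_Integration.integrable_bound[OF intV0] AE_I2 mult_left_le_one_le simp: abs_mult ab)
  have Ediff: "(\<integral>\<omega>. (if U \<omega> then 1 else -1) * T \<omega> \<partial>M) - (\<integral>\<omega>. (if U \<omega> then 1 else -1) * V \<omega> \<partial>M)
      = (\<integral>\<omega>. a \<omega> * D \<omega> \<partial>M)"
    unfolding E1 E2 D_def using iaT iaV by (simp add: right_diff_distrib)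
  define MIv where "MIv = mutual_information (exp 1) (restrict_space borel {0..}) (count_space UNIV) T U"
  define A where "A = (\<integral>\<omega>. (a \<omega>)^2 \<partial>M)"
  have AMI: "A \<le> 2 * MIv" using MIle unfolding A_def MIv_def a_def S_def .
  have inta2: "integrable M (\<lambda>\<omega>. (a \<omega>)^2)"
  proof (rule integrable_const_bound[where B=1])
    show "AE \<omega> in M. norm ((a \<omega>)^2) \<le> 1" by (intro AE_I2) (simp add: abs_square_le_1 ab)
  qed simp
  have A0: "0 \<le> A" unfolding A_def by (intro integral_nonneg_AE) auto
  have MI0: "0 \<le> MIv" using A0 AMI by simp
  define N where "N = (\<integral>\<^sup>+\<omega>. ennreal ((T \<omega> - V \<omega>)\<^sup>2) \<partial>M)"
  have N_eq: "N = (\<integral>\<^sup>+\<omega>. ennreal ((D \<omega>)\<^sup>2) \<partial>M)" by (simp add: N_def D_def)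
  have goal: "ereal (\<integral>\<omega>. a \<omega> * D \<omega> \<partial>M) \<le> enn2ereal (ennsqrt (2 * N * ennreal MIv))"
  proof (cases "N = \<infinity>")
    case Ninf: True
    show ?thesis
    proof (cases "A = 0")
      case True
      have "AE \<omega> in M. (a \<omega>)^2 = 0" using integral_nonneg_eq_0_iff_AE[OF inta2] True A_def by auto
      then have "AE \<omega> in M. a \<omega> * D \<omega> = 0" by auto
      then have "(\<integral>\<omega>. a \<omega> * D \<omega> \<partial>M) = 0" by (rule integral_eq_zero_AE)
      then show ?thesis using enn2ereal_nonneg[of "ennsqrt (2 * N * ennreal MIv)"] by (simp add: zero_ereal_def)
    next
      case False
      then have "0 < MIv" using A0 AMI by simp
      then have "2 * N * ennreal MIv = \<infinity>" using Ninf by (simp add: ennreal_mult_eq_top_iff)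
      then show ?thesis by (simp add: ennsqrt_def)
    qed
  next
    case False
    then obtain B where B: "N = ennreal B" "0 \<le> B" by (cases N) auto
    have intD2: "integrable M (\<lambda>\<omega>. (D \<omega>)^2)" and intD2v: "(\<integral>\<omega>. (D \<omega>)^2 \<partial>M) = B"
      using nn_integral_eq_integrable[of "\<lambda>\<omega>. (D \<omega>)^2" M B] N_eq B by auto
    have "(\<integral>\<omega>. a \<omega> * D \<omega> \<partial>M) \<le> sqrt (A * B)"
    proof (rule amgm_lim[OF A0 B(2)])
      fix l :: real assume l: "0 < l"
      have "(\<integral>\<omega>. a \<omega> * D \<omega> \<partial>M) \<le> (\<integral>\<omega>. (l * (a \<omega>)^2 + (D \<omega>)^2 / l) / 2 \<partial>M)"
        by (rule integral_mono[OF intaD]) (use inta2 intD2 amgm_pt[OF l] in auto)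
      also have "\<dots> = (l * A + B / l) / 2" using inta2 intD2 by (simp add: A_def intD2v[symmetric])
      finally show "(\<integral>\<omega>. a \<omega> * D \<omega> \<partial>M) \<le> (l * A + B / l) / 2" .
    qed
    also have "\<dots> \<le> sqrt (2 * B * MIv)"
      using mult_right_mono[OF AMI B(2)] by (intro real_sqrt_le_mono) (simp add: algebra_simps)
    finally have le: "(\<integral>\<omega>. a \<omega> * D \<omega> \<partial>M) \<le> sqrt (2 * B * MIv)" .
    have "2 * N * ennreal MIv = ennreal (2 * B * MIv)" using B MI0 by (simp add: ennreal_mult)
    then have "ennsqrt (2 * N * ennreal MIv) = ennreal (sqrt (2 * B * MIv))"
      using B MI0 by (simp add: ennsqrt_def)
    moreover have "0 \<le> sqrt (2 * B * MIv)" using B MI0 by simp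
    ultimately show ?thesis using le by simp
  qed
  show ?thesis using goal unfolding Ediff N_def MIv_def .
qed

lemma chain_sum:
  fixes E :: "nat \<Rightarrow> real" and b :: "nat \<Rightarrow> ennreal"
  assumes lim: "(\<lambda>k. E (k0 + k)) \<longlonglongrightarrow> Einf" and z: "E k0 = 0"
    and st: "\<And>k. ereal (E (k0 + k + 1) - E (k0 + k)) \<le> enn2ereal (b k)"
  shows "ereal Einf \<le> enn2ereal (\<Sum>k. b k)"
proof -
  have part: "ereal (E (k0 + K)) \<le> enn2ereal (\<Sum>k<K. b k)" for K
  proof (induction K)
    case 0 then show ?case using z enn2ereal_nonneg[of 0] by (simp add: zero_ereal_def)
  next
    case (Suc K)
    have "ereal (E (k0 + Suc K)) = ereal (E (k0 + K)) + ereal (E (k0 + K + 1) - E (k0 + K))" by simp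
    also have "\<dots> \<le> enn2ereal (\<Sum>k<K. b k) + enn2ereal (b K)"
      using Suc.IH st[of K] by (rule add_mono)
    also have "\<dots> = enn2ereal (\<Sum>k<Suc K. b k)" by (simp add: plus_ennreal.rep_eq)
    finally show ?case .
  qed
  have "ereal (E (k0 + K)) \<le> enn2ereal (\<Sum>k. b k)" for K
  proof -
    have "(\<Sum>k<K. b k) \<le> (\<Sum>k. b k)" by (rule sum_le_suminf[OF summableI]) auto
    then have "enn2ereal (\<Sum>k<K. b k) \<le> enn2ereal (\<Sum>k. b k)" by (simp add: less_eq_ennreal.rep_eq)
    then show ?thesis using part[of K] by simp
  qed
  moreover have "(\<lambda>K. ereal (E (k0 + K))) \<longlonglongrightarrow> ereal Einf" using lim by (rule tendsto_ereal)
  ultimately show ?thesis using LIMSEQ_le_const2[of "\<lambda>K. ereal (E (k0 + K))" "ereal Einf" "enn2ereal (\<Sum>k. b k)"] by blast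
qed

context supersample begin

lemma Phi_space: "\<omega> \<in> space M \<Longrightarrow> Phi \<omega> \<in> space Om"
  using measurable_space[OF Phi_meas] .

lemma Phi_z: "i \<in> I1 \<Longrightarrow> fst (Phi \<omega>) (i, b) = Z i b \<omega>" by (simp add: Phi_def)
lemma Phi_u: "i \<in> I1 \<Longrightarrow> fst (snd (Phi \<omega>)) i = U i \<omega>" by (simp add: Phi_def)

lemma W_meas[measurable]: "W \<in> M \<rightarrow>\<^sub>M Wsp"
proof -
  have "(\<lambda>\<omega>. Wf (Phi \<omega>)) \<in> M \<rightarrow>\<^sub>M Wsp" by measurable
  then show ?thesis by (rule measurable_cong[THEN iffD1, rotated]) (simp add: W_Phi)
qed

lemma half: "i \<in> I1 \<Longrightarrow> emeasure M {\<omega>\<in>space M. U i \<omega>} = ennreal (1/2)"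
proof -
  assume i: "i \<in> I1"
  interpret Mp: prob_space M by (rule M)
  interpret O: prob_space Om
  proof -
    have "prob_space (distr M Om Phi)" by (rule Mp.prob_space_distr[OF Phi_meas])
    then show "prob_space Om" unfolding law .
  qed
  define S1 where "S1 = {x \<in> space Om. fst (snd x) i}"
  define S0 where "S0 = {x \<in> space Om. \<not> fst (snd x) i}"
  have S1s: "S1 \<in> sets Om" unfolding S1_def by (rule us_sets[OF i])
  have "S0 = space Om - S1" by (auto simp: S0_def S1_def)
  then have S0s: "S0 \<in> sets Om" using sets.compl_sets[OF S1s] by simp
  have "emeasure Om S1 = (\<integral>\<^sup>+x. indicator S1 x \<partial>Om)" using S1s by simp
  also have "\<dots> = (\<integral>\<^sup>+x. indicator S1 (sw x) \<partial>Om)" by (rule sw_inv[symmetric]) (use S1s in simp)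
  also have "\<dots> = (\<integral>\<^sup>+x. indicator S0 x \<partial>Om)"
  proof (intro nn_integral_cong)
    fix x assume x: "x \<in> space Om"
    have "sw x \<in> space Om" using measurable_space[OF sw_meas x] .
    then show "indicator S1 (sw x) = (indicator S0 x :: ennreal)"
      using x by (auto simp: S1_def S0_def indicator_def sw_u[OF i])
  qed
  also have "\<dots> = emeasure Om S0" using S0s by simp
  finally have eq: "emeasure Om S1 = emeasure Om S0" .
  have "emeasure Om S1 + emeasure Om S0 = emeasure Om (S1 \<union> S0)" using S1s S0s by (intro plus_emeasure) (auto simp: S1_def S0_def)
  also have "S1 \<union> S0 = space Om" by (auto simp: S1_def S0_def)
  finally have "emeasure Om S1 + emeasure Om S1 = 1" using eq O.emeasure_space_1 by simp
  then have "2 * emeasure Om S1 = 1" by (simp add: mult_2)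
  have m: "emeasure Om S1 = ennreal (measure Om S1)" by (rule O.emeasure_eq_measure)
  have "ennreal (2 * measure Om S1) = ennreal 1"
    using \<open>2 * emeasure Om S1 = 1\<close> unfolding m by (simp add: ennreal_mult)
  then have "2 * measure Om S1 = 1" by (subst (asm) ennreal_inj) auto
  then have "measure Om S1 = 1/2" by simp
  then have S1h: "emeasure Om S1 = ennreal (1/2)" unfolding m by (simp only:)
  have "emeasure M {\<omega>\<in>space M. U i \<omega>} = emeasure M (Phi -` S1 \<inter> space M)"
    by (intro arg_cong[where f="emeasure M"]) (auto simp: S1_def Phi_u[OF i] Phi_space simp del: One_nat_def)
  also have "\<dots> = emeasure (distr M Om Phi) S1" by (rule emeasure_distr[OF Phi_meas S1s, symmetric])
  also have "\<dots> = ennreal (1/2)" unfolding law by (rule S1h)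
  finally show ?thesis .
qed
lemma W_space: "\<omega> \<in> space M \<Longrightarrow> W \<omega> \<in> space Wsp"
  using measurable_space[OF W_meas] .

lemma loss_mu_meas: "w \<in> space Wsp \<Longrightarrow> (\<lambda>z. loss w z) \<in> borel_measurable \<mu>"
  using measurable_compose[OF measurable_Pair1'[of w Wsp \<mu>] loss_meas] by (simp add: comp_def)

lemma Lm: "i \<in> I1 \<Longrightarrow> (\<lambda>\<omega>. loss (W \<omega>) (Z i b \<omega>)) \<in> borel_measurable M"
  by (rule loss_comp_meas[OF W_meas Z_meas])

lemma Usets: "i \<in> I1 \<Longrightarrow> {\<omega>\<in>space M. U i \<omega>} \<in> sets M"
proof -
  assume i: "i \<in> I1"
  have "U i -` {True} \<inter> space M \<in> sets M" by (rule measurable_sets[OF U_meas[OF i]]) simp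
  moreover have "U i -` {True} \<inter> space M = {\<omega>\<in>space M. U i \<omega>}" by auto
  ultimately show ?thesis by simp
qed

lemma GA:
  assumes i: "i \<in> I1"
  shows "(\<integral>\<^sup>+\<omega>. GnW (W \<omega>) \<partial>M) = 2 * (\<integral>\<^sup>+\<omega>. (if U i \<omega> then ennreal (loss (W \<omega>) (Z i False \<omega>)) else 0) \<partial>M)"
proof -
  have gm: "(\<lambda>x. if fst (snd x) i then ennreal (loss (Wf x) (fst x (i, False))) else 0) \<in> borel_measurable Om"
    by (intro measurable_If measurable_const Lz_meas[OF i] us_sets[OF i]) simp
  have "(\<integral>\<^sup>+\<omega>. GnW (W \<omega>) \<partial>M) = (\<integral>\<^sup>+\<omega>. GnW (Wf (Phi \<omega>)) \<partial>M)"
    by (intro nn_integral_cong) (simp add: W_Phi)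
  also have "\<dots> = (\<integral>\<^sup>+x. GnW (Wf x) \<partial>Om)" by (rule nn_Phi[OF G_meas])
  also have "\<dots> = 2 * (\<integral>\<^sup>+x. (if fst (snd x) i then ennreal (loss (Wf x) (fst x (i, False))) else 0) \<partial>Om)"
    by (rule ident_a[OF i])
  also have "(\<integral>\<^sup>+x. (if fst (snd x) i then ennreal (loss (Wf x) (fst x (i, False))) else 0) \<partial>Om)
      = (\<integral>\<^sup>+\<omega>. (if fst (snd (Phi \<omega>)) i then ennreal (loss (Wf (Phi \<omega>)) (fst (Phi \<omega>) (i, False))) else 0) \<partial>M)"
    by (rule nn_Phi[OF gm, symmetric])
  also have "\<dots> = (\<integral>\<^sup>+\<omega>. (if U i \<omega> then ennreal (loss (W \<omega>) (Z i False \<omega>)) else 0) \<partial>M)"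
    by (intro nn_integral_cong) (simp add: W_Phi Phi_z[OF i] Phi_u[OF i])
  finally show ?thesis .
qed

lemma CB:
  assumes i: "i \<in> I1"
  shows "(\<integral>\<^sup>+\<omega>. ennreal (loss (W \<omega>) (Z i (U i \<omega>) \<omega>)) \<partial>M) = 2 * (\<integral>\<^sup>+\<omega>. (if U i \<omega> then 0 else ennreal (loss (W \<omega>) (Z i False \<omega>))) \<partial>M)"
proof -
  have gm: "(\<lambda>x. if fst (snd x) i then 0 else ennreal (loss (Wf x) (fst x (i, False)))) \<in> borel_measurable Om"
    by (intro measurable_If measurable_const Lz_meas[OF i] us_sets[OF i]) simp
  have "(\<integral>\<^sup>+\<omega>. ennreal (loss (W \<omega>) (Z i (U i \<omega>) \<omega>)) \<partial>M)
      = (\<integral>\<^sup>+\<omega>. ennreal (loss (Wf (Phi \<omega>)) (fst (Phi \<omega>) (i, fst (snd (Phi \<omega>)) i))) \<partial>M)"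
    by (intro nn_integral_cong) (simp add: W_Phi Phi_z[OF i] Phi_u[OF i])
  also have "\<dots> = (\<integral>\<^sup>+x. ennreal (loss (Wf x) (fst x (i, fst (snd x) i))) \<partial>Om)"
    by (rule nn_Phi[OF Ltr_meas[OF i]])
  also have "\<dots> = 2 * (\<integral>\<^sup>+x. (if fst (snd x) i then 0 else ennreal (loss (Wf x) (fst x (i, False)))) \<partial>Om)"
    by (rule ident_b[OF i])
  also have "(\<integral>\<^sup>+x. (if fst (snd x) i then 0 else ennreal (loss (Wf x) (fst x (i, False)))) \<partial>Om)
      = (\<integral>\<^sup>+\<omega>. (if fst (snd (Phi \<omega>)) i then 0 else ennreal (loss (Wf (Phi \<omega>)) (fst (Phi \<omega>) (i, False)))) \<partial>M)"
    by (rule nn_Phi[OF gm, symmetric])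
  also have "\<dots> = (\<integral>\<^sup>+\<omega>. (if U i \<omega> then 0 else ennreal (loss (W \<omega>) (Z i False \<omega>))) \<partial>M)"
    by (intro nn_integral_cong) (simp add: W_Phi Phi_z[OF i] Phi_u[OF i])
  finally show ?thesis .
qed

lemma Err_eq:
  assumes fin: "\<And>i. i \<in> I1 \<Longrightarrow> integrable M (\<lambda>\<omega>. loss (W \<omega>) (Z i False \<omega>))"
  shows "(\<integral>\<omega>. (\<integral>z. loss (W \<omega>) z \<partial>\<mu>) \<partial>M) - (\<integral>\<omega>. (1 / real n) * (\<Sum>i\<in>I1. loss (W \<omega>) (Z i (U i \<omega>) \<omega>)) \<partial>M)
       = (2 / real n) * (\<Sum>i\<in>I1. \<integral>\<omega>. (if U i \<omega> then 1 else -1) * loss (W \<omega>) (Z i False \<omega>) \<partial>M)"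
proof -
  interpret Mp: prob_space M by (rule M)
  interpret mu: prob_space \<mu> by (rule mu)
  define a where "a i = (\<integral>\<^sup>+\<omega>. (if U i \<omega> then ennreal (loss (W \<omega>) (Z i False \<omega>)) else 0) \<partial>M)" for i
  define b where "b i = (\<integral>\<^sup>+\<omega>. (if U i \<omega> then 0 else ennreal (loss (W \<omega>) (Z i False \<omega>))) \<partial>M)" for i
  define G where "G = (\<integral>\<^sup>+\<omega>. GnW (W \<omega>) \<partial>M)"
  define c where "c i = (\<integral>\<^sup>+\<omega>. ennreal (loss (W \<omega>) (Z i (U i \<omega>) \<omega>)) \<partial>M)" for i
  have Lcm: "(\<lambda>\<omega>. loss (W \<omega>) (Z i (U i \<omega>) \<omega>)) \<in> borel_measurable M" if i: "i \<in> I1" for i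
  proof -
    have "(\<lambda>\<omega>. if U i \<omega> then loss (W \<omega>) (Z i True \<omega>) else loss (W \<omega>) (Z i False \<omega>)) \<in> borel_measurable M"
      by (intro measurable_If Lm[OF i] Usets[OF i])
    then show ?thesis by (rule measurable_cong[THEN iffD1, rotated]) auto
  qed
  have abfin: "a i \<noteq> \<infinity> \<and> b i \<noteq> \<infinity>" and ab_sum: "a i + b i = (\<integral>\<^sup>+\<omega>. ennreal (loss (W \<omega>) (Z i False \<omega>)) \<partial>M)"
    if i: "i \<in> I1" for i
  proof -
    have m1: "(\<lambda>\<omega>. if U i \<omega> then ennreal (loss (W \<omega>) (Z i False \<omega>)) else 0) \<in> borel_measurable M"
      by (intro measurable_If measurable_const Usets[OF i] measurable_compose[OF Lm[OF i] measurable_ennreal]) simp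
    have m0: "(\<lambda>\<omega>. if U i \<omega> then 0 else ennreal (loss (W \<omega>) (Z i False \<omega>))) \<in> borel_measurable M"
      by (intro measurable_If measurable_const Usets[OF i] measurable_compose[OF Lm[OF i] measurable_ennreal]) simp
    have "a i + b i = (\<integral>\<^sup>+\<omega>. (if U i \<omega> then ennreal (loss (W \<omega>) (Z i False \<omega>)) else 0)
                          + (if U i \<omega> then 0 else ennreal (loss (W \<omega>) (Z i False \<omega>))) \<partial>M)"
      unfolding a_def b_def by (rule nn_integral_add[OF m1 m0, symmetric])
    also have "\<dots> = (\<integral>\<^sup>+\<omega>. ennreal (loss (W \<omega>) (Z i False \<omega>)) \<partial>M)"
      by (intro nn_integral_cong) simp
    finally show ab: "a i + b i = (\<integral>\<^sup>+\<omega>. ennreal (loss (W \<omega>) (Z i False \<omega>)) \<partial>M)" .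
    have "(\<integral>\<^sup>+\<omega>. ennreal (loss (W \<omega>) (Z i False \<omega>)) \<partial>M) \<noteq> \<infinity>" using integrableD(2)[OF fin[OF i]] .
    then show "a i \<noteq> \<infinity> \<and> b i \<noteq> \<infinity>" using ab by (auto simp: ennreal_add_eq_top)
  qed
  have i1: "1 \<in> I1" using n by simp
  have GA': "G = 2 * a i" if "i \<in> I1" for i unfolding G_def a_def by (rule GA[OF that])
  have CB': "c i = 2 * b i" if "i \<in> I1" for i unfolding c_def b_def by (rule CB[OF that])
  have Gfin: "G \<noteq> \<infinity>" using GA'[OF i1] abfin[OF i1] by (simp add: ennreal_mult_eq_top_iff)
  have Gm: "(\<lambda>\<omega>. GnW (W \<omega>)) \<in> borel_measurable M" using measurable_compose[OF W_meas GnW_meas] by (simp add: comp_def)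
  have T1: "(\<integral>\<omega>. (\<integral>z. loss (W \<omega>) z \<partial>\<mu>) \<partial>M) = enn2real G"
  proof -
    have "(\<integral>\<omega>. (\<integral>z. loss (W \<omega>) z \<partial>\<mu>) \<partial>M) = (\<integral>\<omega>. enn2real (GnW (W \<omega>)) \<partial>M)"
    proof (intro Bochner_Integration.integral_cong refl)
      fix \<omega> assume "\<omega> \<in> space M"
      then show "(\<integral>z. loss (W \<omega>) z \<partial>\<mu>) = enn2real (GnW (W \<omega>))"
        unfolding GnW_def using loss_nonneg
        by (intro integral_eq_nn_integral loss_mu_meas W_space) auto
    qed
    also have "\<dots> = enn2real (\<integral>\<^sup>+\<omega>. ennreal (enn2real (GnW (W \<omega>))) \<partial>M)"
      by (rule integral_eq_nn_integral) (use Gm in auto)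
    also have "(\<integral>\<^sup>+\<omega>. ennreal (enn2real (GnW (W \<omega>))) \<partial>M) = G"
      unfolding G_def using nn_integral_PInf_AE[OF Gm Gfin[unfolded G_def]]
      by (intro nn_integral_cong_AE) (auto simp: ennreal_enn2real_if)
    finally show ?thesis .
  qed
  have intc: "integrable M (\<lambda>\<omega>. loss (W \<omega>) (Z i (U i \<omega>) \<omega>))" and T2i: "(\<integral>\<omega>. loss (W \<omega>) (Z i (U i \<omega>) \<omega>) \<partial>M) = enn2real (c i)"
    if i: "i \<in> I1" for i
  proof -
    have "c i \<noteq> \<infinity>" using CB'[OF i] abfin[OF i] by (simp add: ennreal_mult_eq_top_iff)
    then show "integrable M (\<lambda>\<omega>. loss (W \<omega>) (Z i (U i \<omega>) \<omega>))"
      unfolding c_def by (intro integrableI_nonneg Lcm[OF i]) (auto simp: loss_nonneg less_top)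
    show "(\<integral>\<omega>. loss (W \<omega>) (Z i (U i \<omega>) \<omega>) \<partial>M) = enn2real (c i)"
      unfolding c_def by (rule integral_eq_nn_integral[OF Lcm[OF i]]) (simp add: loss_nonneg)
  qed
  have T2: "(\<integral>\<omega>. (1 / real n) * (\<Sum>i\<in>I1. loss (W \<omega>) (Z i (U i \<omega>) \<omega>)) \<partial>M) = (1 / real n) * (\<Sum>i\<in>I1. enn2real (c i))"
    using intc T2i by (simp add: integral_sum)
  have T3: "(\<integral>\<omega>. (if U i \<omega> then 1 else -1) * loss (W \<omega>) (Z i False \<omega>) \<partial>M) = enn2real (a i) - enn2real (b i)"
    if i: "i \<in> I1" for i
  proof -
    have m1: "(\<lambda>\<omega>. if U i \<omega> then loss (W \<omega>) (Z i False \<omega>) else 0) \<in> borel_measurable M"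
      by (intro measurable_If measurable_const Usets[OF i] Lm[OF i]) simp
    have m0: "(\<lambda>\<omega>. if U i \<omega> then 0 else loss (W \<omega>) (Z i False \<omega>)) \<in> borel_measurable M"
      by (intro measurable_If measurable_const Usets[OF i] Lm[OF i]) simp
    have i1: "integrable M (\<lambda>\<omega>. if U i \<omega> then loss (W \<omega>) (Z i False \<omega>) else 0)"
      by (rule Bochner_Integration.integrable_bound[OF fin[OF i] m1]) (auto simp: loss_nonneg)
    have i0: "integrable M (\<lambda>\<omega>. if U i \<omega> then 0 else loss (W \<omega>) (Z i False \<omega>))"
      by (rule Bochner_Integration.integrable_bound[OF fin[OF i] m0]) (auto simp: loss_nonneg)
    have "(\<integral>\<omega>. (if U i \<omega> then 1 else -1) * loss (W \<omega>) (Z i False \<omega>) \<partial>M)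
        = (\<integral>\<omega>. (if U i \<omega> then loss (W \<omega>) (Z i False \<omega>) else 0) - (if U i \<omega> then 0 else loss (W \<omega>) (Z i False \<omega>)) \<partial>M)"
      by (intro Bochner_Integration.integral_cong) auto
    also have "\<dots> = (\<integral>\<omega>. (if U i \<omega> then loss (W \<omega>) (Z i False \<omega>) else 0) \<partial>M) - (\<integral>\<omega>. (if U i \<omega> then 0 else loss (W \<omega>) (Z i False \<omega>)) \<partial>M)"
      by (rule Bochner_Integration.integral_diff[OF i1 i0])
    also have "(\<integral>\<omega>. (if U i \<omega> then loss (W \<omega>) (Z i False \<omega>) else 0) \<partial>M) = enn2real (a i)"
      unfolding a_def by (subst integral_eq_nn_integral[OF m1]) (auto simp: loss_nonneg intro!: arg_cong[where f=enn2real] nn_integral_cong)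
    also have "(\<integral>\<omega>. (if U i \<omega> then 0 else loss (W \<omega>) (Z i False \<omega>)) \<partial>M) = enn2real (b i)"
      unfolding b_def by (subst integral_eq_nn_integral[OF m0]) (auto simp: loss_nonneg intro!: arg_cong[where f=enn2real] nn_integral_cong)
    finally show ?thesis .
  qed
  have eG: "enn2real G = 2 * enn2real (a i)" if "i \<in> I1" for i using GA'[OF that] by (simp add: enn2real_mult)
  have eC: "enn2real (c i) = 2 * enn2real (b i)" if "i \<in> I1" for i using CB'[OF that] by (simp add: enn2real_mult)
  have nI: "real n = real (card I1)" by simp
  have n0: "real n \<noteq> 0" using n by simp
  have "enn2real G = (1 / real n) * (\<Sum>i\<in>I1. 2 * enn2real (a i))"
  proof -
    have "(\<Sum>i\<in>I1. 2 * enn2real (a i)) = (\<Sum>i\<in>I1. enn2real G)" by (intro sum.cong refl) (simp add: eG)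
    also have "\<dots> = real n * enn2real G" by simp
    finally show ?thesis using n0 by simp
  qed
  moreover have "(\<Sum>i\<in>I1. enn2real (c i)) = (\<Sum>i\<in>I1. 2 * enn2real (b i))" by (intro sum.cong refl) (simp add: eC)
  ultimately show ?thesis unfolding T1 T2
    by (simp add: T3 sum_subtractf sum_distrib_left right_diff_distrib sum.cong[OF refl T3] algebra_simps)
qed

end

theorem theorem11:
  fixes M :: "'a measure"
    and \<mu> :: "'z measure"
    and Wsp :: "'w measure"
    and Rsp :: "'r measure"
    and n k0 :: nat
    and Z :: "nat \<Rightarrow> bool \<Rightarrow> 'a \<Rightarrow> 'z"
    and U :: "nat \<Rightarrow> 'a \<Rightarrow> bool"
    and R :: "'a \<Rightarrow> 'r"
    and \<A> :: "(nat \<Rightarrow> 'z) \<Rightarrow> 'r \<Rightarrow> 'w"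
    and W :: "'a \<Rightarrow> 'w"
    and loss :: "'w \<Rightarrow> 'z \<Rightarrow> real"
    and Lc :: "nat \<Rightarrow> nat \<Rightarrow> 'a \<Rightarrow> real"
  assumes M: "prob_space M"
    and mu: "prob_space \<mu>"
    and n: "n \<ge> 1"
    and loss_nonneg: "\<And>w z. loss w z \<ge> 0"
    and loss_meas: "(\<lambda>(w, z). loss w z) \<in> Wsp \<Otimes>\<^sub>M \<mu> \<rightarrow>\<^sub>M borel"
    and A_meas: "(\<lambda>(s, r). \<A> s r) \<in> (\<Pi>\<^sub>M i\<in>{1..n}. \<mu>) \<Otimes>\<^sub>M Rsp \<rightarrow>\<^sub>M Wsp"
    and Z_meas: "\<And>i j. i \<in> {1..n} \<Longrightarrow> Z i j \<in> M \<rightarrow>\<^sub>M \<mu>"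
    and U_meas: "\<And>i. i \<in> {1..n} \<Longrightarrow> U i \<in> M \<rightarrow>\<^sub>M count_space UNIV"
    and R_meas: "R \<in> M \<rightarrow>\<^sub>M Rsp"
    and joint_law:
      "distr M ((\<Pi>\<^sub>M p\<in>{1..n} \<times> UNIV. \<mu>) \<Otimes>\<^sub>M (\<Pi>\<^sub>M i\<in>{1..n}. measure_pmf (pmf_of_set UNIV)) \<Otimes>\<^sub>M Rsp)
         (\<lambda>\<omega>. (restrict (\<lambda>p. Z (fst p) (snd p) \<omega>) ({1..n} \<times> UNIV),
                restrict (\<lambda>i. U i \<omega>) {1..n}, R \<omega>))
       = (\<Pi>\<^sub>M p\<in>{1..n} \<times> UNIV. \<mu>) \<Otimes>\<^sub>M (\<Pi>\<^sub>M i\<in>{1..n}. measure_pmf (pmf_of_set UNIV))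
           \<Otimes>\<^sub>M distr M Rsp R"
    and W_def: "\<And>\<omega>. \<omega> \<in> space M \<Longrightarrow>
                  W \<omega> = \<A> (restrict (\<lambda>i. Z i (U i \<omega>) \<omega>) {1..n}) (R \<omega>)"
    and chain: "\<And>i. i \<in> {1..n} \<Longrightarrow>
       stochastic_chain M (restrict_space borel {0..})
         (\<lambda>l \<omega>. (if U i \<omega> then 1 else -1) * l)
         (\<lambda>\<omega>. loss (W \<omega>) (Z i False \<omega>)) (Lc i) k0"
  shows "ereal ((\<integral>\<omega>. (\<integral>z. loss (W \<omega>) z \<partial>\<mu>) \<partial>M)
                - (\<integral>\<omega>. (1 / real n) * (\<Sum>i\<in>{1..n}. loss (W \<omega>) (Z i (U i \<omega>) \<omega>)) \<partial>M))
         \<le> enn2ereal (ennreal (2 / real n) *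
              (\<Sum>i\<in>{1..n}. \<Sum>k. ennsqrt (2 * (\<integral>\<^sup>+ \<omega>. ennreal ((Lc i (k0 + k + 1) \<omega> - Lc i (k0 + k) \<omega>)\<^sup>2) \<partial>M)
                  * ennreal (prob_space.mutual_information M (exp 1)
                       (restrict_space borel {0..}) (count_space UNIV) (Lc i (k0 + k + 1)) (U i)))))"
proof -
  interpret S: supersample M \<mu> Wsp Rsp n Z U R \<A> W loss
    by (rule supersample.intro[OF M mu n loss_nonneg loss_meas A_meas Z_meas U_meas R_meas joint_law W_def])
  interpret Mp: prob_space M by (rule M)
  define eps where "eps i \<omega> = (if U i \<omega> then 1 else -1 :: real)" for i \<omega>
  define TS where "TS = (restrict_space borel {0..} :: real measure)"
  define b where "b i k = ennsqrt (2 * (\<integral>\<^sup>+ \<omega>. ennreal ((Lc i (k0 + k + 1) \<omega> - Lc i (k0 + k) \<omega>)\<^sup>2) \<partial>M)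
                  * ennreal (prob_space.mutual_information M (exp 1)
                       (restrict_space borel {0..}) (count_space UNIV) (Lc i (k0 + k + 1)) (U i)))" for i k
  define E where "E i = (\<integral>\<omega>. (if U i \<omega> then 1 else -1) * loss (W \<omega>) (Z i False \<omega>) \<partial>M)" for i
  have perI: "integrable M (\<lambda>\<omega>. loss (W \<omega>) (Z i False \<omega>)) \<and> ereal (E i) \<le> enn2ereal (\<Sum>k. b i k)"
    if i: "i \<in> {1..n}" for i
  proof -
    have ch: "stochastic_chain M (restrict_space borel {0..}) (\<lambda>l \<omega>. (if U i \<omega> then 1 else -1) * l)
         (\<lambda>\<omega>. loss (W \<omega>) (Z i False \<omega>)) (Lc i) k0" by (rule chain[OF i])
    note chd = ch[unfolded stochastic_chain_def]
    have intL: "integrable M (\<lambda>\<omega>. (if U i \<omega> then 1 else -1) * loss (W \<omega>) (Z i False \<omega>))"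
      using chd by simp
    have intLc: "\<And>k. k \<ge> k0 \<Longrightarrow> integrable M (\<lambda>\<omega>. (if U i \<omega> then 1 else -1) * Lc i k \<omega>)"
      using chd by simp
    have Lcm: "\<And>k. k \<ge> k0 \<Longrightarrow> Lc i k \<in> M \<rightarrow>\<^sub>M restrict_space borel {0..}"
      using chd by simp
    have lim: "(\<lambda>k. \<integral>\<omega>. (if U i \<omega> then 1 else -1) * Lc i (k0 + k) \<omega> \<partial>M) \<longlonglongrightarrow> E i"
      using chd unfolding E_def by simp
    have z: "(\<integral>\<omega>. (if U i \<omega> then 1 else -1) * Lc i k0 \<omega> \<partial>M) = 0"
      using chd by simp
    have mk: "\<And>k. k > k0 \<Longrightarrow> markov_chain4 M (\<Pi>\<^sub>M t\<in>space (restrict_space borel {0..}). borel)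
          (\<lambda>w. restrict (\<lambda>t::real. (if U i w then 1 else -1) * t) (space (restrict_space borel {0..})))
          (restrict_space borel {0..}) (\<lambda>\<omega>. loss (W \<omega>) (Z i False \<omega>))
          (restrict_space borel {0..}) (Lc i k) (restrict_space borel {0..}) (Lc i (k - 1))"
      using chd by simp
    have fin: "integrable M (\<lambda>\<omega>. loss (W \<omega>) (Z i False \<omega>))"
      by (rule Bochner_Integration.integrable_bound[OF intL]) (auto intro: S.Lm[OF i])
    have step: "ereal ((\<integral>\<omega>. (if U i \<omega> then 1 else -1) * Lc i (k0 + k + 1) \<omega> \<partial>M) - (\<integral>\<omega>. (if U i \<omega> then 1 else -1) * Lc i (k0 + k) \<omega> \<partial>M))
        \<le> enn2ereal (b i k)" for k
    proof -
      have mc: "markov_chain4 M (\<Pi>\<^sub>M t\<in>space (restrict_space borel {0..}). borel)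
          (\<lambda>w. restrict (\<lambda>t::real. (if U i w then 1 else -1) * t) (space (restrict_space borel {0..})))
          (restrict_space borel {0..}) (\<lambda>\<omega>. loss (W \<omega>) (Z i False \<omega>))
          (restrict_space borel {0..}) (Lc i (k0 + k + 1)) (restrict_space borel {0..}) (Lc i (k0 + k))"
        using mk[of "k0 + k + 1"] by simp
      have ci: "cond_indep M ((\<Pi>\<^sub>M t\<in>space (restrict_space borel {0..}). borel) \<Otimes>\<^sub>M restrict_space borel {0..})
          (\<lambda>w. (restrict (\<lambda>t::real. (if U i w then 1 else -1) * t) (space (restrict_space borel {0..})), loss (W w) (Z i False w)))
          (restrict_space borel {0..}) (Lc i (k0 + k)) (restrict_space borel {0..}) (Lc i (k0 + k + 1))"
        using mc unfolding markov_chain4_def by simp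
      show ?thesis unfolding b_def
        by (rule step_bound[OF M U_meas[OF i] S.half[OF i] Lcm Lcm intLc intLc ci]) auto
    qed
    have "ereal (E i) \<le> enn2ereal (\<Sum>k. b i k)"
      by (rule chain_sum[OF lim z]) (use step in \<open>simp add: add.assoc\<close>)
    then show ?thesis using fin by simp
  qed
  have Eeq: "(\<integral>\<omega>. (\<integral>z. loss (W \<omega>) z \<partial>\<mu>) \<partial>M) - (\<integral>\<omega>. (1 / real n) * (\<Sum>i\<in>{1..n}. loss (W \<omega>) (Z i (U i \<omega>) \<omega>)) \<partial>M)
      = (2 / real n) * (\<Sum>i\<in>{1..n}. E i)"
    unfolding E_def by (rule S.Err_eq) (use perI in auto)
  have "ereal ((2 / real n) * (\<Sum>i\<in>{1..n}. E i)) = ereal (2 / real n) * (\<Sum>i\<in>{1..n}. ereal (E i))"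
    by (simp add: sum_ereal)
  also have "\<dots> \<le> ereal (2 / real n) * (\<Sum>i\<in>{1..n}. enn2ereal (\<Sum>k. b i k))"
    by (intro ereal_mult_left_mono sum_mono) (use perI in auto)
  also have "\<dots> = enn2ereal (ennreal (2 / real n) * (\<Sum>i\<in>{1..n}. \<Sum>k. b i k))"
    by (simp add: times_ennreal.rep_eq)
  finally show ?thesis unfolding Eeq b_def .
qed

end
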